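(* Under the curve flow $\gamma_t=k_1\gamma''+k_2\gamma'+r_0\gamma$ with $r_0=-\big(k_2'+\tfrac13(k_1''+2k_1^2)\big)$, the curvature evolution is bi-Hamiltonian: \[ \begin{pmatrix}k_1\\ k_2\end{pmatrix}_t=\mathcal{P}\,\mathsf E\rho_2=\mathcal{Q}\,\mathsf E\rho_4, \] with $\rho_2=k_1k_2$ and $\rho_4=\tfrac13(k_1'')^2+k_1''(k_2'-k_1^2)-k_1(k_1')^2+(k_2')^2-k_1^2k_2'+\tfrac19k_1^4+2k_1k_2^2$. Hence $\int\rho_2\,\mathrm{d}x$ and $\int\rho_4\,\mathrm{d}x$ are conserved integrals (and so is $\int k_1\,\mathrm{d}x$).
   Context: $\gamma(x,t)$ is a family of nondegenerate curves in centroaffine $\mathbb R^3$ parametrized by centroaffine arclength $x$ ($\det(\gamma,\gamma',\gamma'')=1$), with $\gamma'''=(k_1\gamma)'+k_2\gamma$. $D=\partial/\partial x$; $\mathcal{P}=\begin{pmatrix}-2D^3+Dk_1+k_1D & -D^4+D^2k_1+2Dk_2+k_2D\\ D^4-k_1D^2+2k_2D+Dk_2 & \tfrac23(D^5+k_1Dk_1-k_1D^3-D^3k_1)+[k_2,D^2]\end{pmatrix}$, $\mathcal{Q}=\begin{pmatrix}0&D\\ D&0\end{pmatrix}$, and $\mathsf E f=\big(\sum_{j\ge0}(-D)^j\partial f/\partial k_1^{(j)},\ \sum_{j\ge0}(-D)^j\partial f/\partial k_2^{(j)}\big)^{\mathrm T}$ is the vector Euler operator. *)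

theory Defs
  imports "HOL-Analysis.Analysis"
begin

definition C_inf2 :: "(real \<Rightarrow> real \<Rightarrow> 'a::real_normed_vector) \<Rightarrow> bool" where
  "C_inf2 F \<longleftrightarrow> (\<exists>G::nat \<Rightarrow> nat \<Rightarrow> real \<Rightarrow> real \<Rightarrow> 'a.
     G 0 0 = F \<and>
     (\<forall>i j. continuous_on UNIV (\<lambda>(x,t). G i j x t) \<and>
        (\<forall>x t. ((\<lambda>y. G i j y t) has_vector_derivative G (Suc i) j x t) (at x) \<and>
               ((\<lambda>s. G i j x s) has_vector_derivative G i (Suc j) x t) (at t))))"

definition Dx :: "nat \<Rightarrow> (real \<Rightarrow> real \<Rightarrow> 'a::real_normed_vector) \<Rightarrow> real \<Rightarrow> real \<Rightarrow> 'a" where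
  "Dx n F x t = (((\<lambda>g y. vector_derivative g (at y)) ^^ n) (\<lambda>y. F y t)) x"

definition Dt :: "(real \<Rightarrow> real \<Rightarrow> 'a::real_normed_vector) \<Rightarrow> real \<Rightarrow> real \<Rightarrow> 'a" where
  "Dt F x t = vector_derivative (\<lambda>s. F x s) (at t)"

text \<open>A differential function is f :: (nat \<Rightarrow> real) \<Rightarrow> (nat \<Rightarrow> real) \<Rightarrow> real, where
the arguments a, b are the jets: a j stands for k1^(j), b j for k2^(j).\<close>

definition jet :: "(real \<Rightarrow> real) \<Rightarrow> real \<Rightarrow> nat \<Rightarrow> real" where
  "jet u x = (\<lambda>j. (deriv ^^ j) u x)"

definition dens :: "((nat \<Rightarrow> real) \<Rightarrow> (nat \<Rightarrow> real) \<Rightarrow> real) \<Rightarrow> (real \<Rightarrow> real) \<Rightarrow> (real \<Rightarrow> real) \<Rightarrow> real \<Rightarrow> real" where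
  "dens f u v x = f (jet u x) (jet v x)"

definition pd1 :: "((nat \<Rightarrow> real) \<Rightarrow> (nat \<Rightarrow> real) \<Rightarrow> real) \<Rightarrow> nat \<Rightarrow> (nat \<Rightarrow> real) \<Rightarrow> (nat \<Rightarrow> real) \<Rightarrow> real" where
  "pd1 f j a b = deriv (\<lambda>s. f (a(j := s)) b) (a j)"

definition pd2 :: "((nat \<Rightarrow> real) \<Rightarrow> (nat \<Rightarrow> real) \<Rightarrow> real) \<Rightarrow> nat \<Rightarrow> (nat \<Rightarrow> real) \<Rightarrow> (nat \<Rightarrow> real) \<Rightarrow> real" where
  "pd2 f j a b = deriv (\<lambda>s. f a (b(j := s))) (b j)"

text \<open>Components of the vector Euler operator, evaluated along (k1,k2) = (u,v):
  sum over j of (-D)^j applied to the partial derivative; the sum ranges over the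
  (finite, for differential polynomials) set of j on which the partial is not identically 0.\<close>
definition euler1 :: "((nat \<Rightarrow> real) \<Rightarrow> (nat \<Rightarrow> real) \<Rightarrow> real) \<Rightarrow> (real \<Rightarrow> real) \<Rightarrow> (real \<Rightarrow> real) \<Rightarrow> real \<Rightarrow> real" where
  "euler1 f u v x = (\<Sum>j\<in>{j. \<exists>a b. pd1 f j a b \<noteq> 0}.
      (-1)^j * (deriv ^^ j) (\<lambda>y. pd1 f j (jet u y) (jet v y)) x)"

definition euler2 :: "((nat \<Rightarrow> real) \<Rightarrow> (nat \<Rightarrow> real) \<Rightarrow> real) \<Rightarrow> (real \<Rightarrow> real) \<Rightarrow> (real \<Rightarrow> real) \<Rightarrow> real \<Rightarrow> real" where
  "euler2 f u v x = (\<Sum>j\<in>{j. \<exists>a b. pd2 f j a b \<noteq> 0}.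
      (-1)^j * (deriv ^^ j) (\<lambda>y. pd2 f j (jet u y) (jet v y)) x)"

definition rho2 :: "(nat \<Rightarrow> real) \<Rightarrow> (nat \<Rightarrow> real) \<Rightarrow> real" where
  "rho2 a b = a 0 * b 0"

definition rho4 :: "(nat \<Rightarrow> real) \<Rightarrow> (nat \<Rightarrow> real) \<Rightarrow> real" where
  "rho4 a b = 1/3 * (a 2)^2 + a 2 * (b 1 - (a 0)^2) - a 0 * (a 1)^2 + (b 1)^2
              - (a 0)^2 * b 1 + 1/9 * (a 0)^4 + 2 * a 0 * (b 0)^2"

definition opP1 :: "(real \<Rightarrow> real) \<Rightarrow> (real \<Rightarrow> real) \<Rightarrow> (real \<Rightarrow> real) \<Rightarrow> (real \<Rightarrow> real) \<Rightarrow> real \<Rightarrow> real" where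
  "opP1 k1 k2 f g x =
     - 2 * (deriv ^^ 3) f x + deriv (\<lambda>y. k1 y * f y) x + k1 x * deriv f x
     - (deriv ^^ 4) g x + (deriv ^^ 2) (\<lambda>y. k1 y * g y) x
     + 2 * deriv (\<lambda>y. k2 y * g y) x + k2 x * deriv g x"

definition opP2 :: "(real \<Rightarrow> real) \<Rightarrow> (real \<Rightarrow> real) \<Rightarrow> (real \<Rightarrow> real) \<Rightarrow> (real \<Rightarrow> real) \<Rightarrow> real \<Rightarrow> real" where
  "opP2 k1 k2 f g x =
     (deriv ^^ 4) f x - k1 x * (deriv ^^ 2) f x + 2 * k2 x * deriv f x
     + deriv (\<lambda>y. k2 y * f y) x
     + 2/3 * ((deriv ^^ 5) g x + k1 x * deriv (\<lambda>y. k1 y * g y) x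
              - k1 x * (deriv ^^ 3) g x - (deriv ^^ 3) (\<lambda>y. k1 y * g y) x)
     + (k2 x * (deriv ^^ 2) g x - (deriv ^^ 2) (\<lambda>y. k2 y * g y) x)"

definition opQ1 :: "(real \<Rightarrow> real) \<Rightarrow> (real \<Rightarrow> real) \<Rightarrow> real \<Rightarrow> real" where
  "opQ1 f g x = deriv g x"

definition opQ2 :: "(real \<Rightarrow> real) \<Rightarrow> (real \<Rightarrow> real) \<Rightarrow> real \<Rightarrow> real" where
  "opQ2 f g x = deriv f x"

end

theory Submission
  imports Defs
begin

definition fam :: "(nat \<Rightarrow> nat \<Rightarrow> real \<Rightarrow> real \<Rightarrow> 'a::real_normed_vector) \<Rightarrow> bool" where
  "fam G \<longleftrightarrow> (\<forall>i j. continuous_on UNIV (\<lambda>(x,t). G i j x t) \<and>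
        (\<forall>x t. ((\<lambda>y. G i j y t) has_vector_derivative G (Suc i) j x t) (at x) \<and>
               ((\<lambda>s. G i j x s) has_vector_derivative G i (Suc j) x t) (at t)))"

lemma C_inf2_fam: "C_inf2 F \<Longrightarrow> \<exists>G. G 0 0 = F \<and> fam G"
  unfolding C_inf2_def fam_def by blast

lemma fam_dx: "fam G \<Longrightarrow> ((\<lambda>y. G i j y t) has_vector_derivative G (Suc i) j x t) (at x)"
  unfolding fam_def by blast
lemma fam_dt: "fam G \<Longrightarrow> ((\<lambda>s. G i j x s) has_vector_derivative G i (Suc j) x t) (at t)"
  unfolding fam_def by blast
lemma fam_cont: "fam G \<Longrightarrow> continuous_on UNIV (\<lambda>(x,t). G i j x t)"
  unfolding fam_def by blast

lemma fam_Dx: assumes "fam G" shows "Dx n (G 0 0) x t = G n 0 x t"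
proof -
  have "((\<lambda>g y. vector_derivative g (at y)) ^^ n) (\<lambda>y. G 0 0 y t) = (\<lambda>y. G n 0 y t)"
  proof (induction n)
    case 0 then show ?case by simp
  next
    case (Suc n) then show ?case
      using fam_dx[OF assms] by (auto intro!: ext vector_derivative_at)
  qed
  then show ?thesis unfolding Dx_def by simp
qed

lemma fam_Dt: assumes "fam G" shows "Dt (G 0 0) x t = G 0 1 x t"
  unfolding Dt_def using fam_dt[OF assms] by (simp add: vector_derivative_at)

lemma famr_dx: "fam (G::nat \<Rightarrow> nat \<Rightarrow> real \<Rightarrow> real \<Rightarrow> real) \<Longrightarrow> ((\<lambda>y. G i j y t) has_real_derivative G (Suc i) j x t) (at x)"
  using fam_dx has_real_derivative_iff_has_vector_derivative by blast
lemma famr_dt: "fam (G::nat \<Rightarrow> nat \<Rightarrow> real \<Rightarrow> real \<Rightarrow> real) \<Longrightarrow> ((\<lambda>s. G i j x s) has_real_derivative G i (Suc j) x t) (at t)"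
  using fam_dt has_real_derivative_iff_has_vector_derivative by blast

lemma fam_jet: assumes "fam (G::nat \<Rightarrow> nat \<Rightarrow> real \<Rightarrow> real \<Rightarrow> real)"
  shows "(deriv ^^ n) (\<lambda>y. G i 0 y t) = (\<lambda>y. G (i+n) 0 y t)"
proof (induction n)
  case 0 then show ?case by simp
next
  case (Suc n) then show ?case
    using famr_dx[OF assms] by (auto intro!: ext DERIV_imp_deriv)
qed

lemma deriv_fun: "(\<And>y. (f has_real_derivative f' y) (at y)) \<Longrightarrow> deriv f = f'"
  by (auto intro!: ext DERIV_imp_deriv)

lemma three_indep:
  fixes e0 e1 e2 :: "real^3"
  assumes "det (vector [e0, e1, e2] :: real^3^3) = 1"
    and "c0 *\<^sub>R e0 + c1 *\<^sub>R e1 + c2 *\<^sub>R e2 = 0"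
  shows "c0 = 0 \<and> c1 = 0 \<and> c2 = 0"
proof -
  from assms(2) have w: "c0 * e0$i + c1 * e1$i + c2 * e2$i = 0" for i
  proof -
    have "(c0 *\<^sub>R e0 + c1 *\<^sub>R e1 + c2 *\<^sub>R e2)$i = 0" using assms(2) by simp
    then show ?thesis by simp
  qed
  have d: "e0$1*e1$2*e2$3 + e0$2*e1$3*e2$1 + e0$3*e1$1*e2$2 - e0$1*e1$3*e2$2 - e0$2*e1$1*e2$3 - e0$3*e1$2*e2$1 = 1"
    using assms(1) by (simp add: det_3 vector_def)
  have "c0 = c0 * (e0$1*e1$2*e2$3 + e0$2*e1$3*e2$1 + e0$3*e1$1*e2$2 - e0$1*e1$3*e2$2 - e0$2*e1$1*e2$3 - e0$3*e1$2*e2$1)"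
    using d by simp
  also have "\<dots> = (c0 * e0$1 + c1 * e1$1 + c2 * e2$1) * (e1$2*e2$3 - e1$3*e2$2)
      + (c0 * e0$2 + c1 * e1$2 + c2 * e2$2) * (e1$3*e2$1 - e1$1*e2$3)
      + (c0 * e0$3 + c1 * e1$3 + c2 * e2$3) * (e1$1*e2$2 - e1$2*e2$1)"
    by algebra
  finally have 0: "c0 = 0" using w by simp
  have "c1 = c1 * (e0$1*e1$2*e2$3 + e0$2*e1$3*e2$1 + e0$3*e1$1*e2$2 - e0$1*e1$3*e2$2 - e0$2*e1$1*e2$3 - e0$3*e1$2*e2$1)"
    using d by simp
  also have "\<dots> = (c0 * e0$1 + c1 * e1$1 + c2 * e2$1) * (e2$2*e0$3 - e2$3*e0$2)
      + (c0 * e0$2 + c1 * e1$2 + c2 * e2$2) * (e2$3*e0$1 - e2$1*e0$3)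
      + (c0 * e0$3 + c1 * e1$3 + c2 * e2$3) * (e2$1*e0$2 - e2$2*e0$1)"
    by algebra
  finally have 1: "c1 = 0" using w by simp
  have "c2 = c2 * (e0$1*e1$2*e2$3 + e0$2*e1$3*e2$1 + e0$3*e1$1*e2$2 - e0$1*e1$3*e2$2 - e0$2*e1$1*e2$3 - e0$3*e1$2*e2$1)"
    using d by simp
  also have "\<dots> = (c0 * e0$1 + c1 * e1$1 + c2 * e2$1) * (e0$2*e1$3 - e0$3*e1$2)
      + (c0 * e0$2 + c1 * e1$2 + c2 * e2$2) * (e0$3*e1$1 - e0$1*e1$3)
      + (c0 * e0$3 + c1 * e1$3 + c2 * e2$3) * (e0$1*e1$2 - e0$2*e1$1)"
    by algebra
  finally have 2: "c2 = 0" using w by simp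
  from 0 1 2 show ?thesis by simp
qed


lemma deriv_fun2: "(\<And>y. (f has_real_derivative d y) (at y)) \<Longrightarrow> (\<And>y. d y = g y) \<Longrightarrow> deriv f = g"
  by (auto intro!: ext DERIV_imp_deriv)

lemma pd1_rho2: "pd1 rho2 j a b = (if j = 0 then b 0 else 0)"
proof (cases "j = 0")
  case True
  have "((\<lambda>s. (a(j := s)) 0 * b 0) has_real_derivative b 0) (at (a j))"
    using True by (auto intro!: derivative_eq_intros)
  then show ?thesis using True unfolding pd1_def rho2_def by (simp add: DERIV_imp_deriv)
next
  case False
  then have "(\<lambda>s. (a(j := s)) 0 * b 0) = (\<lambda>s. a 0 * b 0)" by auto
  then show ?thesis using False unfolding pd1_def rho2_def by simp
qed

lemma pd2_rho2: "pd2 rho2 j a b = (if j = 0 then a 0 else 0)"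
proof (cases "j = 0")
  case True
  have "((\<lambda>s. a 0 * (b(j := s)) 0) has_real_derivative a 0) (at (b j))"
    using True by (auto intro!: derivative_eq_intros)
  then show ?thesis using True unfolding pd2_def rho2_def by (simp add: DERIV_imp_deriv)
next
  case False
  then have "(\<lambda>s. a 0 * (b(j := s)) 0) = (\<lambda>s. a 0 * b 0)" by auto
  then show ?thesis using False unfolding pd2_def rho2_def by simp
qed

lemma set1_rho2: "{j. \<exists>a b. pd1 rho2 j a b \<noteq> 0} = {0}"
  by (auto simp: pd1_rho2 intro: exI[of _ "\<lambda>_. 1"])
lemma set2_rho2: "{j. \<exists>a b. pd2 rho2 j a b \<noteq> 0} = {0}"
  by (auto simp: pd2_rho2 intro: exI[of _ "\<lambda>_. 1"])

lemma pd1_rho4_0: "pd1 rho4 0 a b = -2 * a 0 * a 2 - a 1 * a 1 - 2 * a 0 * b 1 + 4/9 * a 0 * a 0 * a 0 + 2 * b 0 * b 0"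
proof -
  have "((\<lambda>s. rho4 (a(0 := s)) b) has_real_derivative -2 * a 0 * a 2 - a 1 * a 1 - 2 * a 0 * b 1 + 4/9 * a 0 * a 0 * a 0 + 2 * b 0 * b 0) (at (a 0))"
    unfolding rho4_def by (auto intro!: derivative_eq_intros simp: power2_eq_square power3_eq_cube algebra_simps)
  then show ?thesis unfolding pd1_def by (simp add: DERIV_imp_deriv)
qed
lemma pd1_rho4_1: "pd1 rho4 1 a b = -2 * a 0 * a 1"
proof -
  have "((\<lambda>s. rho4 (a(1 := s)) b) has_real_derivative -2 * a 0 * a 1) (at (a 1))"
    unfolding rho4_def by (auto intro!: derivative_eq_intros simp: power2_eq_square algebra_simps)
  then show ?thesis unfolding pd1_def by (simp add: DERIV_imp_deriv)
qed
lemma pd1_rho4_2: "pd1 rho4 2 a b = 2/3 * a 2 + b 1 - a 0 * a 0"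
proof -
  have "((\<lambda>s. rho4 (a(2 := s)) b) has_real_derivative 2/3 * a 2 + b 1 - a 0 * a 0) (at (a 2))"
    unfolding rho4_def by (auto intro!: derivative_eq_intros simp: power2_eq_square algebra_simps)
  then show ?thesis unfolding pd1_def by (simp add: DERIV_imp_deriv)
qed
lemma pd1_rho4_3: "j \<notin> {0,1,2} \<Longrightarrow> pd1 rho4 j a b = 0"
proof -
  assume "j \<notin> {0,1,2}"
  then have "(\<lambda>s. rho4 (a(j := s)) b) = (\<lambda>s. rho4 a b)" unfolding rho4_def by auto
  then show ?thesis unfolding pd1_def by simp
qed
lemma pd2_rho4_0: "pd2 rho4 0 a b = 4 * a 0 * b 0"
proof -
  have "((\<lambda>s. rho4 a (b(0 := s))) has_real_derivative 4 * a 0 * b 0) (at (b 0))"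
    unfolding rho4_def by (auto intro!: derivative_eq_intros simp: power2_eq_square algebra_simps)
  then show ?thesis unfolding pd2_def by (simp add: DERIV_imp_deriv)
qed
lemma pd2_rho4_1: "pd2 rho4 1 a b = a 2 + 2 * b 1 - a 0 * a 0"
proof -
  have "((\<lambda>s. rho4 a (b(1 := s))) has_real_derivative a 2 + 2 * b 1 - a 0 * a 0) (at (b 1))"
    unfolding rho4_def by (auto intro!: derivative_eq_intros simp: power2_eq_square algebra_simps)
  then show ?thesis unfolding pd2_def by (simp add: DERIV_imp_deriv)
qed
lemma pd2_rho4_2: "j \<notin> {0,1} \<Longrightarrow> pd2 rho4 j a b = 0"
proof -
  assume "j \<notin> {0,1}"
  then have "(\<lambda>s. rho4 a (b(j := s))) = (\<lambda>s. rho4 a b)" unfolding rho4_def by auto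
  then show ?thesis unfolding pd2_def by simp
qed

lemma set1_rho4: "{j. \<exists>a b. pd1 rho4 j a b \<noteq> 0} = {0,1,2}"
proof -
  have "pd1 rho4 0 (\<lambda>_. 0) (\<lambda>_. 1) \<noteq> 0" by (simp add: pd1_rho4_0)
  moreover have "pd1 rho4 1 (\<lambda>_. 1) (\<lambda>_. 1) \<noteq> 0" unfolding pd1_rho4_1 by simp
  moreover have "pd1 rho4 2 (\<lambda>_. 0) (\<lambda>_. 1) \<noteq> 0" by (simp add: pd1_rho4_2)
  ultimately show ?thesis using pd1_rho4_3 by blast
qed
lemma set2_rho4: "{j. \<exists>a b. pd2 rho4 j a b \<noteq> 0} = {0,1}"
proof -
  have "pd2 rho4 0 (\<lambda>_. 1) (\<lambda>_. 1) \<noteq> 0" by (simp add: pd2_rho4_0)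
  moreover have "pd2 rho4 1 (\<lambda>_. 0) (\<lambda>_. 1) \<noteq> 0" unfolding pd2_rho4_1 by simp
  ultimately show ?thesis using pd2_rho4_2 by blast
qed


lemma idx: "Suc 0 = 1" "Suc 1 = 2" "Suc 2 = 3" "Suc 3 = 4" "Suc 4 = 5" "Suc 5 = 6" "Suc 6 = 7" "Suc 7 = 8" "Suc 8 = 9" by simp_all

lemma dpow: "(deriv ^^ 1) f = deriv f" "(deriv ^^ 2) f = deriv (deriv f)" "(deriv ^^ 3) f = deriv (deriv (deriv f))"
  "(deriv ^^ 4) f = deriv (deriv (deriv (deriv f)))" "(deriv ^^ 5) f = deriv (deriv (deriv (deriv (deriv f))))"
  by (simp_all add: eval_nat_numeral)

lemma sum3: "(\<Sum>j\<in>{0,1,2::nat}. f j) = f 0 + f 1 + f 2" by (simp add: add.assoc)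
lemma sum2: "(\<Sum>j\<in>{0,1::nat}. f j) = f 0 + f 1" by simp

lemma conserved:
  fixes \<rho> \<rho>t \<Phi> :: "real \<Rightarrow> real \<Rightarrow> real"
  assumes L: "L > 0"
    and dt: "\<And>x s. ((\<lambda>s. \<rho> x s) has_real_derivative \<rho>t x s) (at s)"
    and cont: "continuous_on UNIV (\<lambda>p. \<rho>t (snd p) (fst p))"
    and contx: "\<And>s. continuous_on UNIV (\<lambda>x. \<rho> x s)"
    and flux: "\<And>x s. ((\<lambda>y. \<Phi> y s) has_real_derivative \<rho>t x s) (at x)"
    and per: "\<And>s. \<Phi> L s = \<Phi> 0 s"
  shows "integral {0..L} (\<lambda>x. \<rho> x t) = integral {0..L} (\<lambda>x. \<rho> x s)"
proof -
  have "((\<lambda>s. integral {0..L} (\<lambda>x. \<rho> x s)) has_real_derivative 0) (at s0)" for s0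
  proof -
    have ld: "((\<lambda>s. integral (cbox 0 L) (\<lambda>x. \<rho> x s)) has_field_derivative integral (cbox 0 L) (\<lambda>x. \<rho>t x s0)) (at s0 within UNIV)"
    proof (rule leibniz_rule_field_derivative[where f="\<lambda>s x. \<rho> x s" and fx="\<lambda>s x. \<rho>t x s"])
      show "\<And>s x. s \<in> UNIV \<Longrightarrow> x \<in> cbox 0 L \<Longrightarrow> ((\<lambda>s. \<rho> x s) has_field_derivative \<rho>t x s) (at s within UNIV)"
        using dt by simp
      show "\<And>s. s \<in> UNIV \<Longrightarrow> (\<lambda>x. \<rho> x s) integrable_on cbox 0 L"
        using contx by (metis continuous_on_subset integrable_continuous_interval subset_UNIV cbox_interval)
      have "(\<lambda>(s, x). \<rho>t x s) = (\<lambda>p. \<rho>t (snd p) (fst p))" by auto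
      then show "continuous_on (UNIV \<times> cbox 0 L) (\<lambda>(s, x). \<rho>t x s)"
        using cont continuous_on_subset by fastforce
    qed auto
    have "((\<lambda>x. \<rho>t x s0) has_integral (\<Phi> L s0 - \<Phi> 0 s0)) {0..L}"
      apply (rule fundamental_theorem_of_calculus)
      using L apply simp
      using flux has_real_derivative_iff_has_vector_derivative
      by (metis has_vector_derivative_at_within)
    then have "integral (cbox 0 L) (\<lambda>x. \<rho>t x s0) = 0" using per by (simp add: integral_unique)
    then show ?thesis using ld by simp
  qed
  then show ?thesis using DERIV_isconst_all by blast
qed

lemma deriv_step:
  assumes "\<And>y. F y = f y" and "(F has_real_derivative F') (at x)" and "(f has_real_derivative d) (at x)" and "d = n"
  shows "F' = n"
proof -
  have "F = f" using assms(1) by auto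
  then show ?thesis using DERIV_unique assms(2-4) by blast
qed

locale kfam =
  fixes K H :: "nat \<Rightarrow> nat \<Rightarrow> real \<Rightarrow> real \<Rightarrow> real"
  assumes fK: "fam K" and fH: "fam H"
    and kt1: "\<And>x t. K 0 1 x t = (2 * K 0 0 x t * K 2 0 x t + 4 * K 0 0 x t * H 1 0 x t + 4 * K 1 0 x t * H 0 0 x t + 2 * K 1 0 x t * K 1 0 x t + (-1) * K 4 0 x t + (-2) * H 3 0 x t)"
    and kt2: "\<And>x t. H 0 1 x t = ((-2) * K 0 0 x t * K 3 0 x t + (-2) * K 0 0 x t * H 2 0 x t + 4/3 * K 0 0 x t * K 0 0 x t * K 1 0 x t + (-4) * K 1 0 x t * K 2 0 x t + (-2) * K 1 0 x t * H 1 0 x t + 2/3 * K 5 0 x t + 4 * H 0 0 x t * H 1 0 x t + H 4 0 x t)"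
begin

lemma Kdx[derivative_intros]: "D = K (Suc i) j x t \<Longrightarrow> ((\<lambda>y. K i j y t) has_real_derivative D) (at x within S)"
  using famr_dx[OF fK, of i j t x] by (simp add: has_field_derivative_at_within)
lemma Hdx[derivative_intros]: "D = H (Suc i) j x t \<Longrightarrow> ((\<lambda>y. H i j y t) has_real_derivative D) (at x within S)"
  using famr_dx[OF fH, of i j t x] by (simp add: has_field_derivative_at_within)

lemma jetK: "jet (\<lambda>y. K 0 0 y t) y = (\<lambda>i. K i 0 y t)"
  by (rule ext) (simp add: jet_def fam_jet[OF fK])
lemma jetH: "jet (\<lambda>y. H 0 0 y t) y = (\<lambda>i. H i 0 y t)"
  by (rule ext) (simp add: jet_def fam_jet[OF fH])
lemma dK: "(deriv ^^ n) (\<lambda>y. K i 0 y t) = (\<lambda>y. K (i+n) 0 y t)" "(deriv ^^ n) (\<lambda>y. H i 0 y t) = (\<lambda>y. H (i+n) 0 y t)"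
  by (rule fam_jet[OF fK]) (rule fam_jet[OF fH])
lemma dK1: "deriv (\<lambda>y. K i 0 y t) = (\<lambda>y. K (Suc i) 0 y t)" "deriv (\<lambda>y. H i 0 y t) = (\<lambda>y. H (Suc i) 0 y t)"
  using fam_jet[OF fK, of 1 i t] fam_jet[OF fH, of 1 i t] by simp_all

lemma eul1_rho2: "euler1 rho2 (\<lambda>y. K 0 0 y t) (\<lambda>y. H 0 0 y t) = (\<lambda>y. H 0 0 y t)"
  unfolding euler1_def set1_rho2 by (rule ext) (simp add: pd1_rho2 jetK jetH)
lemma eul2_rho2: "euler2 rho2 (\<lambda>y. K 0 0 y t) (\<lambda>y. H 0 0 y t) = (\<lambda>y. K 0 0 y t)"
  unfolding euler2_def set2_rho2 by (rule ext) (simp add: pd2_rho2 jetK jetH)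

lemma ch1_1: "deriv (\<lambda>y. K 0 0 y t * H 0 0 y t) = (\<lambda>y. (K 0 0 y t * H 1 0 y t + K 1 0 y t * H 0 0 y t))"
  apply (rule deriv_fun2)
   apply (rule derivative_eq_intros refl)+
  apply ((simp only: idx)?; algebra)
  done

lemma ch1: "deriv (\<lambda>y. K 0 0 y t * H 0 0 y t) = (\<lambda>y. (K 0 0 y t * H 1 0 y t + K 1 0 y t * H 0 0 y t))"
  unfolding dpow ch1_1 by (rule refl)

lemma ch2_1: "deriv (\<lambda>y. K 0 0 y t * K 0 0 y t) = (\<lambda>y. (2 * K 0 0 y t * K 1 0 y t))"
  apply (rule deriv_fun2)
   apply (rule derivative_eq_intros refl)+
  apply ((simp only: idx)?; algebra)
  done

lemma ch2_2: "deriv (\<lambda>y. (2 * K 0 0 y t * K 1 0 y t)) = (\<lambda>y. (2 * K 0 0 y t * K 2 0 y t + 2 * K 1 0 y t * K 1 0 y t))"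
  apply (rule deriv_fun2)
   apply (rule derivative_eq_intros refl)+
  apply ((simp only: idx)?; algebra)
  done

lemma ch2: "(deriv ^^ 2) (\<lambda>y. K 0 0 y t * K 0 0 y t) = (\<lambda>y. (2 * K 0 0 y t * K 2 0 y t + 2 * K 1 0 y t * K 1 0 y t))"
  unfolding dpow ch2_1 ch2_2 by (rule refl)

lemma ch3_1: "deriv (\<lambda>y. H 0 0 y t * K 0 0 y t) = (\<lambda>y. (K 0 0 y t * H 1 0 y t + K 1 0 y t * H 0 0 y t))"
  apply (rule deriv_fun2)
   apply (rule derivative_eq_intros refl)+
  apply ((simp only: idx)?; algebra)
  done

lemma ch3: "deriv (\<lambda>y. H 0 0 y t * K 0 0 y t) = (\<lambda>y. (K 0 0 y t * H 1 0 y t + K 1 0 y t * H 0 0 y t))"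
  unfolding dpow ch3_1 by (rule refl)

lemma ch4_1: "deriv (\<lambda>y. H 0 0 y t * H 0 0 y t) = (\<lambda>y. (2 * H 0 0 y t * H 1 0 y t))"
  apply (rule deriv_fun2)
   apply (rule derivative_eq_intros refl)+
  apply ((simp only: idx)?; algebra)
  done

lemma ch4: "deriv (\<lambda>y. H 0 0 y t * H 0 0 y t) = (\<lambda>y. (2 * H 0 0 y t * H 1 0 y t))"
  unfolding dpow ch4_1 by (rule refl)

lemma ch5_1: "deriv (\<lambda>y. K 0 0 y t * K 0 0 y t) = (\<lambda>y. (2 * K 0 0 y t * K 1 0 y t))"
  apply (rule deriv_fun2)
   apply (rule derivative_eq_intros refl)+
  apply ((simp only: idx)?; algebra)
  done

lemma ch5: "deriv (\<lambda>y. K 0 0 y t * K 0 0 y t) = (\<lambda>y. (2 * K 0 0 y t * K 1 0 y t))"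
  unfolding dpow ch5_1 by (rule refl)

lemma ch6_1: "deriv (\<lambda>y. K 0 0 y t * K 0 0 y t) = (\<lambda>y. (2 * K 0 0 y t * K 1 0 y t))"
  apply (rule deriv_fun2)
   apply (rule derivative_eq_intros refl)+
  apply ((simp only: idx)?; algebra)
  done

lemma ch6_2: "deriv (\<lambda>y. (2 * K 0 0 y t * K 1 0 y t)) = (\<lambda>y. (2 * K 0 0 y t * K 2 0 y t + 2 * K 1 0 y t * K 1 0 y t))"
  apply (rule deriv_fun2)
   apply (rule derivative_eq_intros refl)+
  apply ((simp only: idx)?; algebra)
  done

lemma ch6_3: "deriv (\<lambda>y. (2 * K 0 0 y t * K 2 0 y t + 2 * K 1 0 y t * K 1 0 y t)) = (\<lambda>y. (2 * K 0 0 y t * K 3 0 y t + 6 * K 1 0 y t * K 2 0 y t))"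
  apply (rule deriv_fun2)
   apply (rule derivative_eq_intros refl)+
  apply ((simp only: idx)?; algebra)
  done

lemma ch6: "(deriv ^^ 3) (\<lambda>y. K 0 0 y t * K 0 0 y t) = (\<lambda>y. (2 * K 0 0 y t * K 3 0 y t + 6 * K 1 0 y t * K 2 0 y t))"
  unfolding dpow ch6_1 ch6_2 ch6_3 by (rule refl)

lemma ch7_1: "deriv (\<lambda>y. H 0 0 y t * K 0 0 y t) = (\<lambda>y. (K 0 0 y t * H 1 0 y t + K 1 0 y t * H 0 0 y t))"
  apply (rule deriv_fun2)
   apply (rule derivative_eq_intros refl)+
  apply ((simp only: idx)?; algebra)
  done

lemma ch7_2: "deriv (\<lambda>y. (K 0 0 y t * H 1 0 y t + K 1 0 y t * H 0 0 y t)) = (\<lambda>y. (K 0 0 y t * H 2 0 y t + 2 * K 1 0 y t * H 1 0 y t + K 2 0 y t * H 0 0 y t))"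
  apply (rule deriv_fun2)
   apply (rule derivative_eq_intros refl)+
  apply ((simp only: idx)?; algebra)
  done

lemma ch7: "(deriv ^^ 2) (\<lambda>y. H 0 0 y t * K 0 0 y t) = (\<lambda>y. (K 0 0 y t * H 2 0 y t + 2 * K 1 0 y t * H 1 0 y t + K 2 0 y t * H 0 0 y t))"
  unfolding dpow ch7_1 ch7_2 by (rule refl)

lemma ch8_1: "deriv (\<lambda>y. -2 * K 0 0 y t * K 1 0 y t) = (\<lambda>y. ((-2) * K 0 0 y t * K 2 0 y t + (-2) * K 1 0 y t * K 1 0 y t))"
  apply (rule deriv_fun2)
   apply (rule derivative_eq_intros refl)+
  apply ((simp only: idx)?; algebra)
  done

lemma ch8: "(deriv ^^ 1) (\<lambda>y. -2 * K 0 0 y t * K 1 0 y t) = (\<lambda>y. ((-2) * K 0 0 y t * K 2 0 y t + (-2) * K 1 0 y t * K 1 0 y t))"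
  unfolding dpow ch8_1 by (rule refl)

lemma ch9_1: "deriv (\<lambda>y. 2/3 * K 2 0 y t + H 1 0 y t - K 0 0 y t * K 0 0 y t) = (\<lambda>y. ((-2) * K 0 0 y t * K 1 0 y t + 2/3 * K 3 0 y t + H 2 0 y t))"
  apply (rule deriv_fun2)
   apply (rule derivative_eq_intros refl)+
  apply ((simp only: idx)?; algebra)
  done

lemma ch9_2: "deriv (\<lambda>y. ((-2) * K 0 0 y t * K 1 0 y t + 2/3 * K 3 0 y t + H 2 0 y t)) = (\<lambda>y. ((-2) * K 0 0 y t * K 2 0 y t + (-2) * K 1 0 y t * K 1 0 y t + 2/3 * K 4 0 y t + H 3 0 y t))"
  apply (rule deriv_fun2)
   apply (rule derivative_eq_intros refl)+
  apply ((simp only: idx)?; algebra)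
  done

lemma ch9: "(deriv ^^ 2) (\<lambda>y. 2/3 * K 2 0 y t + H 1 0 y t - K 0 0 y t * K 0 0 y t) = (\<lambda>y. ((-2) * K 0 0 y t * K 2 0 y t + (-2) * K 1 0 y t * K 1 0 y t + 2/3 * K 4 0 y t + H 3 0 y t))"
  unfolding dpow ch9_1 ch9_2 by (rule refl)

lemma ch10_1: "deriv (\<lambda>y. K 2 0 y t + 2 * H 1 0 y t - K 0 0 y t * K 0 0 y t) = (\<lambda>y. ((-2) * K 0 0 y t * K 1 0 y t + K 3 0 y t + 2 * H 2 0 y t))"
  apply (rule deriv_fun2)
   apply (rule derivative_eq_intros refl)+
  apply ((simp only: idx)?; algebra)
  done

lemma ch10: "(deriv ^^ 1) (\<lambda>y. K 2 0 y t + 2 * H 1 0 y t - K 0 0 y t * K 0 0 y t) = (\<lambda>y. ((-2) * K 0 0 y t * K 1 0 y t + K 3 0 y t + 2 * H 2 0 y t))"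
  unfolding dpow ch10_1 by (rule refl)

lemma eul1_rho4: "euler1 rho4 (\<lambda>y. K 0 0 y t) (\<lambda>y. H 0 0 y t) = (\<lambda>y. ((-2) * K 0 0 y t * K 2 0 y t + (-2) * K 0 0 y t * H 1 0 y t + 4/9 * K 0 0 y t * K 0 0 y t * K 0 0 y t + (-1) * K 1 0 y t * K 1 0 y t + 2/3 * K 4 0 y t + 2 * H 0 0 y t * H 0 0 y t + H 3 0 y t))"
  apply (rule ext)
  unfolding euler1_def set1_rho4 sum3 jetK jetH pd1_rho4_0 pd1_rho4_1 pd1_rho4_2 funpow_0 ch8 ch9
  by algebra

lemma eul2_rho4: "euler2 rho4 (\<lambda>y. K 0 0 y t) (\<lambda>y. H 0 0 y t) = (\<lambda>y. (2 * K 0 0 y t * K 1 0 y t + 4 * K 0 0 y t * H 0 0 y t + (-1) * K 3 0 y t + (-2) * H 2 0 y t))"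
  apply (rule ext)
  unfolding euler2_def set2_rho4 sum2 jetK jetH pd2_rho4_0 pd2_rho4_1 funpow_0 ch10
  by algebra

lemma ch11_1: "deriv (\<lambda>y. 2 * K 0 0 y t * K 1 0 y t + 4 * K 0 0 y t * H 0 0 y t + (-1) * K 3 0 y t + (-2) * H 2 0 y t) = (\<lambda>y. (2 * K 0 0 y t * K 2 0 y t + 4 * K 0 0 y t * H 1 0 y t + 4 * K 1 0 y t * H 0 0 y t + 2 * K 1 0 y t * K 1 0 y t + (-1) * K 4 0 y t + (-2) * H 3 0 y t))"
  apply (rule deriv_fun2)
   apply (rule derivative_eq_intros refl)+
  apply ((simp only: idx)?; algebra)
  done

lemma ch11: "deriv (\<lambda>y. 2 * K 0 0 y t * K 1 0 y t + 4 * K 0 0 y t * H 0 0 y t + (-1) * K 3 0 y t + (-2) * H 2 0 y t) = (\<lambda>y. (2 * K 0 0 y t * K 2 0 y t + 4 * K 0 0 y t * H 1 0 y t + 4 * K 1 0 y t * H 0 0 y t + 2 * K 1 0 y t * K 1 0 y t + (-1) * K 4 0 y t + (-2) * H 3 0 y t))"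
  unfolding dpow ch11_1 by (rule refl)

lemma ch12_1: "deriv (\<lambda>y. (-2) * K 0 0 y t * K 2 0 y t + (-2) * K 0 0 y t * H 1 0 y t + 4/9 * K 0 0 y t * K 0 0 y t * K 0 0 y t + (-1) * K 1 0 y t * K 1 0 y t + 2/3 * K 4 0 y t + 2 * H 0 0 y t * H 0 0 y t + H 3 0 y t) = (\<lambda>y. ((-2) * K 0 0 y t * K 3 0 y t + (-2) * K 0 0 y t * H 2 0 y t + 4/3 * K 0 0 y t * K 0 0 y t * K 1 0 y t + (-4) * K 1 0 y t * K 2 0 y t + (-2) * K 1 0 y t * H 1 0 y t + 2/3 * K 5 0 y t + 4 * H 0 0 y t * H 1 0 y t + H 4 0 y t))"
  apply (rule deriv_fun2)
   apply (rule derivative_eq_intros refl)+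
  apply ((simp only: idx)?; algebra)
  done

lemma ch12: "deriv (\<lambda>y. (-2) * K 0 0 y t * K 2 0 y t + (-2) * K 0 0 y t * H 1 0 y t + 4/9 * K 0 0 y t * K 0 0 y t * K 0 0 y t + (-1) * K 1 0 y t * K 1 0 y t + 2/3 * K 4 0 y t + 2 * H 0 0 y t * H 0 0 y t + H 3 0 y t) = (\<lambda>y. ((-2) * K 0 0 y t * K 3 0 y t + (-2) * K 0 0 y t * H 2 0 y t + 4/3 * K 0 0 y t * K 0 0 y t * K 1 0 y t + (-4) * K 1 0 y t * K 2 0 y t + (-2) * K 1 0 y t * H 1 0 y t + 2/3 * K 5 0 y t + 4 * H 0 0 y t * H 1 0 y t + H 4 0 y t))"
  unfolding dpow ch12_1 by (rule refl)

lemma T1: "K 0 1 x t = opP1 (\<lambda>y. K 0 0 y t) (\<lambda>y. H 0 0 y t) (euler1 rho2 (\<lambda>y. K 0 0 y t) (\<lambda>y. H 0 0 y t)) (euler2 rho2 (\<lambda>y. K 0 0 y t) (\<lambda>y. H 0 0 y t)) x"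
  unfolding opP1_def eul1_rho2 eul2_rho2 dK dK1 ch1 ch2 ch3 ch4 ch5 ch6 ch7 kt1
  by ((simp only: idx add_0)?; algebra)

lemma T2: "H 0 1 x t = opP2 (\<lambda>y. K 0 0 y t) (\<lambda>y. H 0 0 y t) (euler1 rho2 (\<lambda>y. K 0 0 y t) (\<lambda>y. H 0 0 y t)) (euler2 rho2 (\<lambda>y. K 0 0 y t) (\<lambda>y. H 0 0 y t)) x"
  unfolding opP2_def eul1_rho2 eul2_rho2 dK dK1 ch1 ch2 ch3 ch4 ch5 ch6 ch7 kt2
  by ((simp only: idx add_0)?; algebra)

lemma T3: "K 0 1 x t = opQ1 (euler1 rho4 (\<lambda>y. K 0 0 y t) (\<lambda>y. H 0 0 y t)) (euler2 rho4 (\<lambda>y. K 0 0 y t) (\<lambda>y. H 0 0 y t)) x"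
  unfolding opQ1_def eul1_rho4 eul2_rho4 ch11 kt1
  by simp

lemma T4: "H 0 1 x t = opQ2 (euler1 rho4 (\<lambda>y. K 0 0 y t) (\<lambda>y. H 0 0 y t)) (euler2 rho4 (\<lambda>y. K 0 0 y t) (\<lambda>y. H 0 0 y t)) x"
  unfolding opQ2_def eul1_rho4 eul2_rho4 ch12 kt2
  by simp


lemma Kdt[derivative_intros]: "D = K i (Suc j) x t \<Longrightarrow> ((\<lambda>s. K i j x s) has_real_derivative D) (at t within S)"
  using famr_dt[OF fK, of i j x t] by (simp add: has_field_derivative_at_within)
lemma Hdt[derivative_intros]: "D = H i (Suc j) x t \<Longrightarrow> ((\<lambda>s. H i j x s) has_real_derivative D) (at t within S)"
  using famr_dt[OF fH, of i j x t] by (simp add: has_field_derivative_at_within)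

lemma contKx[continuous_intros]: "continuous_on S (\<lambda>x. K i j x t)"
  by (rule continuous_at_imp_continuous_on) (metis DERIV_isCont famr_dx[OF fK])
lemma contHx[continuous_intros]: "continuous_on S (\<lambda>x. H i j x t)"
  by (rule continuous_at_imp_continuous_on) (metis DERIV_isCont famr_dx[OF fH])

lemma swapc: "continuous_on UNIV (\<lambda>(x,t). F x t) \<Longrightarrow> continuous_on S (\<lambda>p. F (snd p) (fst p))"
proof -
  assume c: "continuous_on UNIV (\<lambda>(x,t). F x t)"
  have "continuous_on UNIV ((\<lambda>(x,t). F x t) \<circ> (\<lambda>p. (snd p, fst p)))"
    by (rule continuous_on_compose) (auto intro!: continuous_intros c[THEN continuous_on_subset])
  then show ?thesis by (auto simp: o_def intro: continuous_on_subset)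
qed
lemma contK2[continuous_intros]: "continuous_on S (\<lambda>p. K i j (snd p) (fst p))"
  by (rule swapc) (rule fam_cont[OF fK])
lemma contH2[continuous_intros]: "continuous_on S (\<lambda>p. H i j (snd p) (fst p))"
  by (rule swapc) (rule fam_cont[OF fH])

lemma perK:
  assumes "\<And>x t. K 0 0 (x+L) t = K 0 0 x t"
  shows "K i 0 (x+L) t = K i 0 x t"
proof (induction i arbitrary: x)
  case 0 then show ?case using assms by simp
next
  case (Suc i)
  have e: "(\<lambda>y. K i 0 (y+L) t) = (\<lambda>y. K i 0 y t)" using Suc by auto
  have "((\<lambda>y. K i 0 (y+L) t) has_real_derivative K (Suc i) 0 (x+L) t) (at x)"
    using DERIV_shift[of "\<lambda>y. K i 0 y t" "K (Suc i) 0 (x+L) t" x L] famr_dx[OF fK, of i 0 t "x+L"] by simp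
  then show ?case unfolding e using DERIV_unique famr_dx[OF fK] by blast
qed
lemma perH:
  assumes "\<And>x t. H 0 0 (x+L) t = H 0 0 x t"
  shows "H i 0 (x+L) t = H i 0 x t"
proof (induction i arbitrary: x)
  case 0 then show ?case using assms by simp
next
  case (Suc i)
  have e: "(\<lambda>y. H i 0 (y+L) t) = (\<lambda>y. H i 0 y t)" using Suc by auto
  have "((\<lambda>y. H i 0 (y+L) t) has_real_derivative H (Suc i) 0 (x+L) t) (at x)"
    using DERIV_shift[of "\<lambda>y. H i 0 y t" "H (Suc i) 0 (x+L) t" x L] famr_dx[OF fH, of i 0 t "x+L"] by simp
  then show ?case unfolding e using DERIV_unique famr_dx[OF fH] by blast
qed

lemma kt11: "K 1 1 x t = (2 * K 0 0 x t * K 3 0 x t + 4 * K 0 0 x t * H 2 0 x t + 6 * K 1 0 x t * K 2 0 x t + 8 * K 1 0 x t * H 1 0 x t + 4 * K 2 0 x t * H 0 0 x t + (-1) * K 5 0 x t + (-2) * H 4 0 x t)"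
  apply (rule deriv_step[where F="\<lambda>y. K 0 1 y t"])
    apply (rule kt1)
   apply (rule derivative_eq_intros refl)+
   apply (simp only: idx)
  apply (rule derivative_eq_intros refl)+
  apply ((simp only: idx)?; algebra)+
  done

lemma kt21: "K 2 1 x t = (2 * K 0 0 x t * K 4 0 x t + 4 * K 0 0 x t * H 3 0 x t + 8 * K 1 0 x t * K 3 0 x t + 12 * K 1 0 x t * H 2 0 x t + 12 * K 2 0 x t * H 1 0 x t + 6 * K 2 0 x t * K 2 0 x t + 4 * K 3 0 x t * H 0 0 x t + (-1) * K 6 0 x t + (-2) * H 5 0 x t)"
  apply (rule deriv_step[where F="\<lambda>y. K 1 1 y t"])
    apply (rule kt11)
   apply (rule derivative_eq_intros refl)+
   apply (simp only: idx)
  apply (rule derivative_eq_intros refl)+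
  apply ((simp only: idx)?; algebra)+
  done

lemma ht11: "H 1 1 x t = (8/3 * K 0 0 x t * K 1 0 x t * K 1 0 x t + (-2) * K 0 0 x t * K 4 0 x t + (-2) * K 0 0 x t * H 3 0 x t + 4/3 * K 0 0 x t * K 0 0 x t * K 2 0 x t + (-6) * K 1 0 x t * K 3 0 x t + (-4) * K 1 0 x t * H 2 0 x t + (-2) * K 2 0 x t * H 1 0 x t + (-4) * K 2 0 x t * K 2 0 x t + 2/3 * K 6 0 x t + 4 * H 0 0 x t * H 2 0 x t + 4 * H 1 0 x t * H 1 0 x t + H 5 0 x t)"
  apply (rule deriv_step[where F="\<lambda>y. H 0 1 y t"])
    apply (rule kt2)
   apply (rule derivative_eq_intros refl)+
   apply (simp only: idx)
  apply (rule derivative_eq_intros refl)+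
  apply ((simp only: idx)?; algebra)+
  done

lemma cons2:
  assumes L: "L > 0" and per: "\<And>x t. K 0 0 (x+L) t = K 0 0 x t" "\<And>x t. H 0 0 (x+L) t = H 0 0 x t"
  shows "integral {0..L} (\<lambda>x. (K 0 0 x t * H 0 0 x t)) = integral {0..L} (\<lambda>x. (K 0 0 x s * H 0 0 x s))"
proof (rule conserved[where \<rho>="\<lambda>x s. (K 0 0 x s * H 0 0 x s)" and \<rho>t="\<lambda>x s. ((-4) * K 0 0 x s * K 1 0 x s * K 2 0 x s + (-2) * K 0 0 x s * K 1 0 x s * H 1 0 x s + 2 * K 0 0 x s * K 2 0 x s * H 0 0 x s + 2/3 * K 0 0 x s * K 5 0 x s + 8 * K 0 0 x s * H 0 0 x s * H 1 0 x s + K 0 0 x s * H 4 0 x s + (-2) * K 0 0 x s * K 0 0 x s * K 3 0 x s + (-2) * K 0 0 x s * K 0 0 x s * H 2 0 x s + 4/3 * K 0 0 x s * K 0 0 x s * K 0 0 x s * K 1 0 x s + 4 * K 1 0 x s * H 0 0 x s * H 0 0 x s + 2 * K 1 0 x s * K 1 0 x s * H 0 0 x s + (-1) * K 4 0 x s * H 0 0 x s + (-2) * H 0 0 x s * H 3 0 x s)" and \<Phi>="\<lambda>x s. (2 * K 0 0 x s * K 1 0 x s * H 0 0 x s + 2/3 * K 0 0 x s * K 4 0 x s + 4 * K 0 0 x s * H 0 0 x s * H 0 0 x s + K 0 0 x s * H 3 0 x s + (-2) * K 0 0 x s * K 0 0 x s * K 2 0 x s + (-2) * K 0 0 x s * K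 0 0 x s * H 1 0 x s + 1/3 * K 0 0 x s * K 0 0 x s * K 0 0 x s * K 0 0 x s + (-2/3) * K 1 0 x s * K 3 0 x s + (-1) * K 1 0 x s * H 2 0 x s + K 2 0 x s * H 1 0 x s + 1/3 * K 2 0 x s * K 2 0 x s + (-1) * K 3 0 x s * H 0 0 x s + (-2) * H 0 0 x s * H 2 0 x s + H 1 0 x s * H 1 0 x s)", OF L])
  show "((\<lambda>s. (K 0 0 x s * H 0 0 x s)) has_real_derivative ((-4) * K 0 0 x s * K 1 0 x s * K 2 0 x s + (-2) * K 0 0 x s * K 1 0 x s * H 1 0 x s + 2 * K 0 0 x s * K 2 0 x s * H 0 0 x s + 2/3 * K 0 0 x s * K 5 0 x s + 8 * K 0 0 x s * H 0 0 x s * H 1 0 x s + K 0 0 x s * H 4 0 x s + (-2) * K 0 0 x s * K 0 0 x s * K 3 0 x s + (-2) * K 0 0 x s * K 0 0 x s * H 2 0 x s + 4/3 * K 0 0 x s * K 0 0 x s * K 0 0 x s * K 1 0 x s + 4 * K 1 0 x s * H 0 0 x s * H 0 0 x s + 2 * K 1 0 x s * K 1 0 x s * H 0 0 x s + (-1) * K 4 0 x s * H 0 0 x s + (-2) * H 0 0 x s * H 3 0 x s)) (at s)" for x s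
    apply (rule derivative_eq_intros refl)+
    apply (simp only: idx kt1 kt2 kt11 kt21 ht11)
    apply (rule refl | algebra)?
    done
  show "continuous_on UNIV (\<lambda>p. ((-4) * K 0 0 (snd p) (fst p) * K 1 0 (snd p) (fst p) * K 2 0 (snd p) (fst p) + (-2) * K 0 0 (snd p) (fst p) * K 1 0 (snd p) (fst p) * H 1 0 (snd p) (fst p) + 2 * K 0 0 (snd p) (fst p) * K 2 0 (snd p) (fst p) * H 0 0 (snd p) (fst p) + 2/3 * K 0 0 (snd p) (fst p) * K 5 0 (snd p) (fst p) + 8 * K 0 0 (snd p) (fst p) * H 0 0 (snd p) (fst p) * H 1 0 (snd p) (fst p) + K 0 0 (snd p) (fst p) * H 4 0 (snd p) (fst p) + (-2) * K 0 0 (snd p) (fst p) * K 0 0 (snd p) (fst p) * K 3 0 (snd p) (fst p) + (-2) * K 0 0 (snd p) (fst p) * K 0 0 (snd p) (fst p) * H 2 0 (snd p) (fst p) + 4/3 * K 0 0 (snd p) (fst p) * K 0 0 (snd p) (fst p) * K 0 0 (snd p) (fst p) * K 1 0 (snd p) (fst p) + 4 * K 1 0 (snd p) (fst p) * H 0 0 (snd p) (fst p) * H 0 0 (snd p) (fst p) + 2 * K 1 0 (snd p) (fst p) * K 1 0 (snd p) (fst p) * H 0 0 (snd p) (fst p) + (-1) * K 4 0 (snd p) (fst p) * H 0 0 (snd p) (fst p) + (-2) * H 0 0 (snd p) (fst p) * H 3 0 (snd p) (fst p)))"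
    by (intro continuous_intros)
  show "continuous_on UNIV (\<lambda>x. (K 0 0 x s * H 0 0 x s))" for s
    by (intro continuous_intros)
  show "((\<lambda>y. (2 * K 0 0 y s * K 1 0 y s * H 0 0 y s + 2/3 * K 0 0 y s * K 4 0 y s + 4 * K 0 0 y s * H 0 0 y s * H 0 0 y s + K 0 0 y s * H 3 0 y s + (-2) * K 0 0 y s * K 0 0 y s * K 2 0 y s + (-2) * K 0 0 y s * K 0 0 y s * H 1 0 y s + 1/3 * K 0 0 y s * K 0 0 y s * K 0 0 y s * K 0 0 y s + (-2/3) * K 1 0 y s * K 3 0 y s + (-1) * K 1 0 y s * H 2 0 y s + K 2 0 y s * H 1 0 y s + 1/3 * K 2 0 y s * K 2 0 y s + (-1) * K 3 0 y s * H 0 0 y s + (-2) * H 0 0 y s * H 2 0 y s + H 1 0 y s * H 1 0 y s)) has_real_derivative ((-4) * K 0 0 x s * K 1 0 x s * K 2 0 x s + (-2) * K 0 0 x s * K 1 0 x s * H 1 0 x s + 2 * K 0 0 x s * K 2 0 x s * H 0 0 x s + 2/3 * K 0 0 x s * K 5 0 x s + 8 * K 0 0 x s * H 0 0 x s * H 1 0 x s + K 0 0 x s * H 4 0 x s + (-2) * K 0 0 x s * K 0 0 x s * K 3 0 x s + (-2) * K 0 0 x s * K 0 0 x s * H 2 0 x s + 4/3 * K 0 0 x s * K 0 0 x s * K 0 0 x s * K 1 0 x s + 4 * K 1 0 x s * H 0 0 x s * H 0 0 x s + 2 * K 1 0 x s * K 1 0 x s * H 0 0 x s + (-1) * K 4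 0 x s * H 0 0 x s + (-2) * H 0 0 x s * H 3 0 x s)) (at x)" for x s
    apply (rule derivative_eq_intros refl)+
    apply ((simp only: idx)?; algebra)
    done
  have pK: "K i 0 L s = K i 0 0 s" for i s using perK[OF per(1), of i 0 s] by simp
  have pH: "H i 0 L s = H i 0 0 s" for i s using perH[OF per(2), of i 0 s] by simp
  show "(2 * K 0 0 L s * K 1 0 L s * H 0 0 L s + 2/3 * K 0 0 L s * K 4 0 L s + 4 * K 0 0 L s * H 0 0 L s * H 0 0 L s + K 0 0 L s * H 3 0 L s + (-2) * K 0 0 L s * K 0 0 L s * K 2 0 L s + (-2) * K 0 0 L s * K 0 0 L s * H 1 0 L s + 1/3 * K 0 0 L s * K 0 0 L s * K 0 0 L s * K 0 0 L s + (-2/3) * K 1 0 L s * K 3 0 L s + (-1) * K 1 0 L s * H 2 0 L s + K 2 0 L s * H 1 0 L s + 1/3 * K 2 0 L s * K 2 0 L s + (-1) * K 3 0 L s * H 0 0 L s + (-2) * H 0 0 L s * H 2 0 L s + H 1 0 L s * H 1 0 L s) = (2 * K 0 0 0 s * K 1 0 0 s * H 0 0 0 s + 2/3 * K 0 0 0 s * K 4 0 0 s + 4 * K 0 0 0 s * H 0 0 0 s * H 0 0 0 s + K 0 0 0 s * H 3 0 0 s + (-2) * K 0 0 0 s * K 0 0 0 s * K 2 0 0 s + (-2) * K 0 0 0 s * K 0 0 0 s * H 1 0 0 s + 1/3 * K 0 0 0 s * K 0 0 0 s * K 0 0 0 s * K 0 0 0 s + (-2/3) * K 1 0 0 s * K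 3 0 0 s + (-1) * K 1 0 0 s * H 2 0 0 s + K 2 0 0 s * H 1 0 0 s + 1/3 * K 2 0 0 s * K 2 0 0 s + (-1) * K 3 0 0 s * H 0 0 0 s + (-2) * H 0 0 0 s * H 2 0 0 s + H 1 0 0 s * H 1 0 0 s)" for s
    unfolding pK pH by (rule refl)
qed

lemma cons4:
  assumes L: "L > 0" and per: "\<And>x t. K 0 0 (x+L) t = K 0 0 x t" "\<And>x t. H 0 0 (x+L) t = H 0 0 x t"
  shows "integral {0..L} (\<lambda>x. ((-1) * K 0 0 x t * K 1 0 x t * K 1 0 x t + 2 * K 0 0 x t * H 0 0 x t * H 0 0 x t + (-1) * K 0 0 x t * K 0 0 x t * K 2 0 x t + (-1) * K 0 0 x t * K 0 0 x t * H 1 0 x t + 1/9 * K 0 0 x t * K 0 0 x t * K 0 0 x t * K 0 0 x t + K 2 0 x t * H 1 0 x t + 1/3 * K 2 0 x t * K 2 0 x t + H 1 0 x t * H 1 0 x t)) = integral {0..L} (\<lambda>x. ((-1) * K 0 0 x s * K 1 0 x s * K 1 0 x s + 2 * K 0 0 x s * H 0 0 x s * H 0 0 x s + (-1) * K 0 0 x s * K 0 0 x s * K 2 0 x s + (-1) * K 0 0 x s * K 0 0 x s * H 1 0 x s + 1/9 * K 0 0 x s * K 0 0 x s * K 0 0 x s * K 0 0 x s + K 2 0 x s * H 1 0 x s + 1/3 * K 2 0 x s * K 2 0 x s + H 1 0 x s * H 1 0 x s))"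
proof (rule conserved[where \<rho>="\<lambda>x s. ((-1) * K 0 0 x s * K 1 0 x s * K 1 0 x s + 2 * K 0 0 x s * H 0 0 x s * H 0 0 x s + (-1) * K 0 0 x s * K 0 0 x s * K 2 0 x s + (-1) * K 0 0 x s * K 0 0 x s * H 1 0 x s + 1/9 * K 0 0 x s * K 0 0 x s * K 0 0 x s * K 0 0 x s + K 2 0 x s * H 1 0 x s + 1/3 * K 2 0 x s * K 2 0 x s + H 1 0 x s * H 1 0 x s)" and \<rho>t="\<lambda>x s. ((-32) * K 0 0 x s * K 1 0 x s * K 2 0 x s * H 0 0 x s + 2 * K 0 0 x s * K 1 0 x s * K 5 0 x s + (-16) * K 0 0 x s * K 1 0 x s * H 0 0 x s * H 1 0 x s + 4 * K 0 0 x s * K 1 0 x s * H 4 0 x s + (-46/3) * K 0 0 x s * K 1 0 x s * K 1 0 x s * K 2 0 x s + (-56/3) * K 0 0 x s * K 1 0 x s * K 1 0 x s * H 1 0 x s + 4/3 * K 0 0 x s * K 2 0 x s * K 4 0 x s + 4 * K 0 0 x s * K 2 0 x s * H 0 0 x s * H 0 0 x s + 14/3 * K 0 0 x s * K 2 0 x s * H 3 0 x s + 8/3 * K 0 0 x s * K 5 0 x s * H 0 0 x s + 4 * K 0 0 x s * H 0 0 x s * H 4 0 x s + 24 * K 0 0 x s * H 0 0 x s * H 0 0 x s * H 1 0 x s + 4 * K 0 0 x s * H 1 0 x s * H 3 0 x s + (-6) * K 0 0 x s * K 0 0 x s * K 1 0 x s * K 3 0 x s + (-16) * K 0 0 x s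 * K 0 0 x s * K 1 0 x s * H 2 0 x s + (-58/3) * K 0 0 x s * K 0 0 x s * K 2 0 x s * H 1 0 x s + (-14/3) * K 0 0 x s * K 0 0 x s * K 2 0 x s * K 2 0 x s + (-12) * K 0 0 x s * K 0 0 x s * K 3 0 x s * H 0 0 x s + 1/3 * K 0 0 x s * K 0 0 x s * K 6 0 x s + (-12) * K 0 0 x s * K 0 0 x s * H 0 0 x s * H 2 0 x s + (-12) * K 0 0 x s * K 0 0 x s * H 1 0 x s * H 1 0 x s + K 0 0 x s * K 0 0 x s * H 5 0 x s + 64/9 * K 0 0 x s * K 0 0 x s * K 0 0 x s * K 1 0 x s * H 0 0 x s + (-16/9) * K 0 0 x s * K 0 0 x s * K 0 0 x s * K 1 0 x s * K 1 0 x s + (-4/9) * K 0 0 x s * K 0 0 x s * K 0 0 x s * K 4 0 x s + (-26/9) * K 0 0 x s * K 0 0 x s * K 0 0 x s * H 3 0 x s + (-4/9) * K 0 0 x s * K 0 0 x s * K 0 0 x s * K 0 0 x s * K 2 0 x s + 16/9 * K 0 0 x s * K 0 0 x s * K 0 0 x s * K 0 0 x s * H 1 0 x s + (-2/3) * K 1 0 x s * K 2 0 x s * K 3 0 x s + 4 * K 1 0 x s * K 2 0 x s * H 2 0 x s + (-4) * K 1 0 x s * K 3 0 x s * H 1 0 x s + 8 * K 1 0 x s * H 0 0 x s * H 0 0 x s * H 0 0 x s + 4 * K 1 0 x s * H 1 0 x s * H 2 0 x s + K 1 0 x s * K 1 0 x s * K 4 0 x s + 4 * K 1 0 x s * K 1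 0 x s * H 0 0 x s * H 0 0 x s + 2 * K 1 0 x s * K 1 0 x s * H 3 0 x s + (-4) * K 1 0 x s * K 1 0 x s * K 1 0 x s * H 0 0 x s + (-2) * K 1 0 x s * K 1 0 x s * K 1 0 x s * K 1 0 x s + 8/3 * K 2 0 x s * K 3 0 x s * H 0 0 x s + 4 * K 2 0 x s * H 0 0 x s * H 2 0 x s + 12 * K 2 0 x s * H 1 0 x s * H 1 0 x s + (-1/3) * K 2 0 x s * H 5 0 x s + 4 * K 2 0 x s * K 2 0 x s * H 1 0 x s + 4 * K 3 0 x s * H 0 0 x s * H 1 0 x s + (-2) * K 4 0 x s * H 0 0 x s * H 0 0 x s + 1/3 * K 6 0 x s * H 1 0 x s + 8 * H 0 0 x s * H 1 0 x s * H 2 0 x s + (-4) * H 0 0 x s * H 0 0 x s * H 3 0 x s + 8 * H 1 0 x s * H 1 0 x s * H 1 0 x s)" and \<Phi>="\<lambda>x s. (4/3 * K 0 0 x s * K 1 0 x s * K 4 0 x s + 4 * K 0 0 x s * K 1 0 x s * H 0 0 x s * H 0 0 x s + 2 * K 0 0 x s * K 1 0 x s * H 3 0 x s + (-4) * K 0 0 x s * K 1 0 x s * K 1 0 x s * H 0 0 x s + (-2) * K 0 0 x s * K 1 0 x s * K 1 0 x s * K 1 0 x s + 8/3 * K 0 0 x s * K 2 0 x s * H 2 0 x s + (-8/3) * K 0 0 x s * K 3 0 x s * H 1 0 x s + 8/3 * K 0 0 x s * K 4 0 x s * H 0 0 x s + 4 * K 0 0 x s * H 0 0 x s * H 3 0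 x s + 8 * K 0 0 x s * H 0 0 x s * H 0 0 x s * H 0 0 x s + (-14/3) * K 0 0 x s * K 0 0 x s * K 1 0 x s * K 2 0 x s + (-22/3) * K 0 0 x s * K 0 0 x s * K 1 0 x s * H 1 0 x s + (-12) * K 0 0 x s * K 0 0 x s * K 2 0 x s * H 0 0 x s + 1/3 * K 0 0 x s * K 0 0 x s * K 5 0 x s + (-12) * K 0 0 x s * K 0 0 x s * H 0 0 x s * H 1 0 x s + K 0 0 x s * K 0 0 x s * H 4 0 x s + (-4/9) * K 0 0 x s * K 0 0 x s * K 0 0 x s * K 3 0 x s + (-26/9) * K 0 0 x s * K 0 0 x s * K 0 0 x s * H 2 0 x s + (-4/9) * K 0 0 x s * K 0 0 x s * K 0 0 x s * K 0 0 x s * K 1 0 x s + 16/9 * K 0 0 x s * K 0 0 x s * K 0 0 x s * K 0 0 x s * H 0 0 x s + 4/3 * K 1 0 x s * K 2 0 x s * H 1 0 x s + (-8/3) * K 1 0 x s * K 3 0 x s * H 0 0 x s + (-4) * K 1 0 x s * H 0 0 x s * H 2 0 x s + 4 * K 1 0 x s * H 1 0 x s * H 1 0 x s + (-1/3) * K 1 0 x s * K 1 0 x s * K 3 0 x s + 8 * K 2 0 x s * H 0 0 x s * H 1 0 x s + (-1/3) * K 2 0 x s * H 4 0 x s + 8/3 * K 2 0 x s * K 2 0 x s * H 0 0 x s + (-2) * K 3 0 x s * H 0 0 x s * H 0 0 x s + 1/3 * K 3 0 x s * H 3 0 x s + (-1/3) * K 4 0 x s * H 2 0 x s + 1/3 *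 K 5 0 x s * H 1 0 x s + 8 * H 0 0 x s * H 1 0 x s * H 1 0 x s + (-4) * H 0 0 x s * H 0 0 x s * H 2 0 x s)", OF L])
  show "((\<lambda>s. ((-1) * K 0 0 x s * K 1 0 x s * K 1 0 x s + 2 * K 0 0 x s * H 0 0 x s * H 0 0 x s + (-1) * K 0 0 x s * K 0 0 x s * K 2 0 x s + (-1) * K 0 0 x s * K 0 0 x s * H 1 0 x s + 1/9 * K 0 0 x s * K 0 0 x s * K 0 0 x s * K 0 0 x s + K 2 0 x s * H 1 0 x s + 1/3 * K 2 0 x s * K 2 0 x s + H 1 0 x s * H 1 0 x s)) has_real_derivative ((-32) * K 0 0 x s * K 1 0 x s * K 2 0 x s * H 0 0 x s + 2 * K 0 0 x s * K 1 0 x s * K 5 0 x s + (-16) * K 0 0 x s * K 1 0 x s * H 0 0 x s * H 1 0 x s + 4 * K 0 0 x s * K 1 0 x s * H 4 0 x s + (-46/3) * K 0 0 x s * K 1 0 x s * K 1 0 x s * K 2 0 x s + (-56/3) * K 0 0 x s * K 1 0 x s * K 1 0 x s * H 1 0 x s + 4/3 * K 0 0 x s * K 2 0 x s * K 4 0 x s + 4 * K 0 0 x s * K 2 0 x s * H 0 0 x s * H 0 0 x s + 14/3 * K 0 0 x s * K 2 0 x s * H 3 0 x s + 8/3 * K 0 0 x s * K 5 0 x s * H 0 0 x s + 4 * K 0 0 x s * H 0 0 x s * H 4 0 x s + 24 * K 0 0 x s * H 0 0 x s * H 0 0 x s * H 1 0 x s + 4 * K 0 0 x s * H 1 0 x s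 * H 3 0 x s + (-6) * K 0 0 x s * K 0 0 x s * K 1 0 x s * K 3 0 x s + (-16) * K 0 0 x s * K 0 0 x s * K 1 0 x s * H 2 0 x s + (-58/3) * K 0 0 x s * K 0 0 x s * K 2 0 x s * H 1 0 x s + (-14/3) * K 0 0 x s * K 0 0 x s * K 2 0 x s * K 2 0 x s + (-12) * K 0 0 x s * K 0 0 x s * K 3 0 x s * H 0 0 x s + 1/3 * K 0 0 x s * K 0 0 x s * K 6 0 x s + (-12) * K 0 0 x s * K 0 0 x s * H 0 0 x s * H 2 0 x s + (-12) * K 0 0 x s * K 0 0 x s * H 1 0 x s * H 1 0 x s + K 0 0 x s * K 0 0 x s * H 5 0 x s + 64/9 * K 0 0 x s * K 0 0 x s * K 0 0 x s * K 1 0 x s * H 0 0 x s + (-16/9) * K 0 0 x s * K 0 0 x s * K 0 0 x s * K 1 0 x s * K 1 0 x s + (-4/9) * K 0 0 x s * K 0 0 x s * K 0 0 x s * K 4 0 x s + (-26/9) * K 0 0 x s * K 0 0 x s * K 0 0 x s * H 3 0 x s + (-4/9) * K 0 0 x s * K 0 0 x s * K 0 0 x s * K 0 0 x s * K 2 0 x s + 16/9 * K 0 0 x s * K 0 0 x s * K 0 0 x s * K 0 0 x s * H 1 0 x s + (-2/3) * K 1 0 x s * K 2 0 x s * K 3 0 x s + 4 * K 1 0 x s * K 2 0 x s * H 2 0 x s + (-4) * K 1 0 x s * K 3 0 x s * H 1 0 x s + 8 * K 1 0 x s * H 0 0 x s * H 0 0 x s * H 0 0 x s + 4 * K 1 0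 x s * H 1 0 x s * H 2 0 x s + K 1 0 x s * K 1 0 x s * K 4 0 x s + 4 * K 1 0 x s * K 1 0 x s * H 0 0 x s * H 0 0 x s + 2 * K 1 0 x s * K 1 0 x s * H 3 0 x s + (-4) * K 1 0 x s * K 1 0 x s * K 1 0 x s * H 0 0 x s + (-2) * K 1 0 x s * K 1 0 x s * K 1 0 x s * K 1 0 x s + 8/3 * K 2 0 x s * K 3 0 x s * H 0 0 x s + 4 * K 2 0 x s * H 0 0 x s * H 2 0 x s + 12 * K 2 0 x s * H 1 0 x s * H 1 0 x s + (-1/3) * K 2 0 x s * H 5 0 x s + 4 * K 2 0 x s * K 2 0 x s * H 1 0 x s + 4 * K 3 0 x s * H 0 0 x s * H 1 0 x s + (-2) * K 4 0 x s * H 0 0 x s * H 0 0 x s + 1/3 * K 6 0 x s * H 1 0 x s + 8 * H 0 0 x s * H 1 0 x s * H 2 0 x s + (-4) * H 0 0 x s * H 0 0 x s * H 3 0 x s + 8 * H 1 0 x s * H 1 0 x s * H 1 0 x s)) (at s)" for x s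
    apply (rule derivative_eq_intros refl)+
    apply (simp only: idx kt1 kt2 kt11 kt21 ht11)
    apply (rule refl | algebra)?
    done
  show "continuous_on UNIV (\<lambda>p. ((-32) * K 0 0 (snd p) (fst p) * K 1 0 (snd p) (fst p) * K 2 0 (snd p) (fst p) * H 0 0 (snd p) (fst p) + 2 * K 0 0 (snd p) (fst p) * K 1 0 (snd p) (fst p) * K 5 0 (snd p) (fst p) + (-16) * K 0 0 (snd p) (fst p) * K 1 0 (snd p) (fst p) * H 0 0 (snd p) (fst p) * H 1 0 (snd p) (fst p) + 4 * K 0 0 (snd p) (fst p) * K 1 0 (snd p) (fst p) * H 4 0 (snd p) (fst p) + (-46/3) * K 0 0 (snd p) (fst p) * K 1 0 (snd p) (fst p) * K 1 0 (snd p) (fst p) * K 2 0 (snd p) (fst p) + (-56/3) * K 0 0 (snd p) (fst p) * K 1 0 (snd p) (fst p) * K 1 0 (snd p) (fst p) * H 1 0 (snd p) (fst p) + 4/3 * K 0 0 (snd p) (fst p) * K 2 0 (snd p) (fst p) * K 4 0 (snd p) (fst p) + 4 * K 0 0 (snd p) (fst p) * K 2 0 (snd p) (fst p) * H 0 0 (snd p) (fst p) * H 0 0 (snd p) (fst p) + 14/3 * K 0 0 (snd p) (fst p) * K 2 0 (snd p) (fst p) * H 3 0 (snd p) (fst p) + 8/3 * K 0 0 (snd p) (fst p) * K 5 0 (snd p) (fst p) * H 0 0 (snd p) (fst p) + 4 * K 0 0 (snd p) (fst p) * H 0 0 (snd p) (fst p) * H 4 0 (snd p) (fst p) + 24 *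 K 0 0 (snd p) (fst p) * H 0 0 (snd p) (fst p) * H 0 0 (snd p) (fst p) * H 1 0 (snd p) (fst p) + 4 * K 0 0 (snd p) (fst p) * H 1 0 (snd p) (fst p) * H 3 0 (snd p) (fst p) + (-6) * K 0 0 (snd p) (fst p) * K 0 0 (snd p) (fst p) * K 1 0 (snd p) (fst p) * K 3 0 (snd p) (fst p) + (-16) * K 0 0 (snd p) (fst p) * K 0 0 (snd p) (fst p) * K 1 0 (snd p) (fst p) * H 2 0 (snd p) (fst p) + (-58/3) * K 0 0 (snd p) (fst p) * K 0 0 (snd p) (fst p) * K 2 0 (snd p) (fst p) * H 1 0 (snd p) (fst p) + (-14/3) * K 0 0 (snd p) (fst p) * K 0 0 (snd p) (fst p) * K 2 0 (snd p) (fst p) * K 2 0 (snd p) (fst p) + (-12) * K 0 0 (snd p) (fst p) * K 0 0 (snd p) (fst p) * K 3 0 (snd p) (fst p) * H 0 0 (snd p) (fst p) + 1/3 * K 0 0 (snd p) (fst p) * K 0 0 (snd p) (fst p) * K 6 0 (snd p) (fst p) + (-12) * K 0 0 (snd p) (fst p) * K 0 0 (snd p) (fst p) * H 0 0 (snd p) (fst p) * H 2 0 (snd p) (fst p) + (-12) * K 0 0 (snd p) (fst p) * K 0 0 (snd p) (fst p) * H 1 0 (snd p) (fst p) * H 1 0 (snd p) (fst p) + K 0 0 (snd p) (fst p) * K 0 0 (snd p) (fst p) * H 5 0 (snd p) (fst p) + 64/9 * K 0 0 (snd p) (fst p) * K 0 0 (snd p) (fst p) * K 0 0 (snd p) (fst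 p) * K 1 0 (snd p) (fst p) * H 0 0 (snd p) (fst p) + (-16/9) * K 0 0 (snd p) (fst p) * K 0 0 (snd p) (fst p) * K 0 0 (snd p) (fst p) * K 1 0 (snd p) (fst p) * K 1 0 (snd p) (fst p) + (-4/9) * K 0 0 (snd p) (fst p) * K 0 0 (snd p) (fst p) * K 0 0 (snd p) (fst p) * K 4 0 (snd p) (fst p) + (-26/9) * K 0 0 (snd p) (fst p) * K 0 0 (snd p) (fst p) * K 0 0 (snd p) (fst p) * H 3 0 (snd p) (fst p) + (-4/9) * K 0 0 (snd p) (fst p) * K 0 0 (snd p) (fst p) * K 0 0 (snd p) (fst p) * K 0 0 (snd p) (fst p) * K 2 0 (snd p) (fst p) + 16/9 * K 0 0 (snd p) (fst p) * K 0 0 (snd p) (fst p) * K 0 0 (snd p) (fst p) * K 0 0 (snd p) (fst p) * H 1 0 (snd p) (fst p) + (-2/3) * K 1 0 (snd p) (fst p) * K 2 0 (snd p) (fst p) * K 3 0 (snd p) (fst p) + 4 * K 1 0 (snd p) (fst p) * K 2 0 (snd p) (fst p) * H 2 0 (snd p) (fst p) + (-4) * K 1 0 (snd p) (fst p) * K 3 0 (snd p) (fst p) * H 1 0 (snd p) (fst p) + 8 * K 1 0 (snd p) (fst p) * H 0 0 (snd p) (fst p) * H 0 0 (snd p) (fst p) * H 0 0 (snd p) (fst p) + 4 * K 1 0 (snd p) (fst p) * H 1 0 (snd p) (fst p) * H 2 0 (snd p) (fst p) + K 1 0 (snd p) (fst p) * K 1 0 (snd p) (fst p) * K 4 0 (snd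 p) (fst p) + 4 * K 1 0 (snd p) (fst p) * K 1 0 (snd p) (fst p) * H 0 0 (snd p) (fst p) * H 0 0 (snd p) (fst p) + 2 * K 1 0 (snd p) (fst p) * K 1 0 (snd p) (fst p) * H 3 0 (snd p) (fst p) + (-4) * K 1 0 (snd p) (fst p) * K 1 0 (snd p) (fst p) * K 1 0 (snd p) (fst p) * H 0 0 (snd p) (fst p) + (-2) * K 1 0 (snd p) (fst p) * K 1 0 (snd p) (fst p) * K 1 0 (snd p) (fst p) * K 1 0 (snd p) (fst p) + 8/3 * K 2 0 (snd p) (fst p) * K 3 0 (snd p) (fst p) * H 0 0 (snd p) (fst p) + 4 * K 2 0 (snd p) (fst p) * H 0 0 (snd p) (fst p) * H 2 0 (snd p) (fst p) + 12 * K 2 0 (snd p) (fst p) * H 1 0 (snd p) (fst p) * H 1 0 (snd p) (fst p) + (-1/3) * K 2 0 (snd p) (fst p) * H 5 0 (snd p) (fst p) + 4 * K 2 0 (snd p) (fst p) * K 2 0 (snd p) (fst p) * H 1 0 (snd p) (fst p) + 4 * K 3 0 (snd p) (fst p) * H 0 0 (snd p) (fst p) * H 1 0 (snd p) (fst p) + (-2) * K 4 0 (snd p) (fst p) * H 0 0 (snd p) (fst p) * H 0 0 (snd p) (fst p) + 1/3 * K 6 0 (snd p) (fst p) * H 1 0 (snd p) (fst p) + 8 * H 0 0 (snd p) (fst p) * H 1 0 (snd p) (fst p) * H 2 0 (snd p) (fst p) + (-4) * H 0 0 (snd p) (fst p) * H 0 0 (snd p) (fst p) * H 3 0 (snd p)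 (fst p) + 8 * H 1 0 (snd p) (fst p) * H 1 0 (snd p) (fst p) * H 1 0 (snd p) (fst p)))"
    by (intro continuous_intros)
  show "continuous_on UNIV (\<lambda>x. ((-1) * K 0 0 x s * K 1 0 x s * K 1 0 x s + 2 * K 0 0 x s * H 0 0 x s * H 0 0 x s + (-1) * K 0 0 x s * K 0 0 x s * K 2 0 x s + (-1) * K 0 0 x s * K 0 0 x s * H 1 0 x s + 1/9 * K 0 0 x s * K 0 0 x s * K 0 0 x s * K 0 0 x s + K 2 0 x s * H 1 0 x s + 1/3 * K 2 0 x s * K 2 0 x s + H 1 0 x s * H 1 0 x s))" for s
    by (intro continuous_intros)
  show "((\<lambda>y. (4/3 * K 0 0 y s * K 1 0 y s * K 4 0 y s + 4 * K 0 0 y s * K 1 0 y s * H 0 0 y s * H 0 0 y s + 2 * K 0 0 y s * K 1 0 y s * H 3 0 y s + (-4) * K 0 0 y s * K 1 0 y s * K 1 0 y s * H 0 0 y s + (-2) * K 0 0 y s * K 1 0 y s * K 1 0 y s * K 1 0 y s + 8/3 * K 0 0 y s * K 2 0 y s * H 2 0 y s + (-8/3) * K 0 0 y s * K 3 0 y s * H 1 0 y s + 8/3 * K 0 0 y s * K 4 0 y s * H 0 0 y s + 4 * K 0 0 y s * H 0 0 y s * H 3 0 y s + 8 * K 0 0 y s * H 0 0 y s * H 0 0 y s * H 0 0 y s + (-14/3) * K 0 0 y s * K 0 0 y s * K 1 0 y s * K 2 0 y s + (-22/3) * K 0 0 y s * K 0 0 y s * K 1 0 y s * H 1 0 y s +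 (-12) * K 0 0 y s * K 0 0 y s * K 2 0 y s * H 0 0 y s + 1/3 * K 0 0 y s * K 0 0 y s * K 5 0 y s + (-12) * K 0 0 y s * K 0 0 y s * H 0 0 y s * H 1 0 y s + K 0 0 y s * K 0 0 y s * H 4 0 y s + (-4/9) * K 0 0 y s * K 0 0 y s * K 0 0 y s * K 3 0 y s + (-26/9) * K 0 0 y s * K 0 0 y s * K 0 0 y s * H 2 0 y s + (-4/9) * K 0 0 y s * K 0 0 y s * K 0 0 y s * K 0 0 y s * K 1 0 y s + 16/9 * K 0 0 y s * K 0 0 y s * K 0 0 y s * K 0 0 y s * H 0 0 y s + 4/3 * K 1 0 y s * K 2 0 y s * H 1 0 y s + (-8/3) * K 1 0 y s * K 3 0 y s * H 0 0 y s + (-4) * K 1 0 y s * H 0 0 y s * H 2 0 y s + 4 * K 1 0 y s * H 1 0 y s * H 1 0 y s + (-1/3) * K 1 0 y s * K 1 0 y s * K 3 0 y s + 8 * K 2 0 y s * H 0 0 y s * H 1 0 y s + (-1/3) * K 2 0 y s * H 4 0 y s + 8/3 * K 2 0 y s * K 2 0 y s * H 0 0 y s + (-2) * K 3 0 y s * H 0 0 y s * H 0 0 y s + 1/3 * K 3 0 y s * H 3 0 y s + (-1/3) * K 4 0 y s * H 2 0 y s + 1/3 * K 5 0 y s * H 1 0 y s + 8 * H 0 0 y s * H 1 0 y s * H 1 0 y s + (-4) * H 0 0 y s * H 0 0 y s * H 2 0 y s)) has_real_derivative ((-32) * K 0 0 x s * K 1 0 x s * K 2 0 x s * H 0 0 x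 s + 2 * K 0 0 x s * K 1 0 x s * K 5 0 x s + (-16) * K 0 0 x s * K 1 0 x s * H 0 0 x s * H 1 0 x s + 4 * K 0 0 x s * K 1 0 x s * H 4 0 x s + (-46/3) * K 0 0 x s * K 1 0 x s * K 1 0 x s * K 2 0 x s + (-56/3) * K 0 0 x s * K 1 0 x s * K 1 0 x s * H 1 0 x s + 4/3 * K 0 0 x s * K 2 0 x s * K 4 0 x s + 4 * K 0 0 x s * K 2 0 x s * H 0 0 x s * H 0 0 x s + 14/3 * K 0 0 x s * K 2 0 x s * H 3 0 x s + 8/3 * K 0 0 x s * K 5 0 x s * H 0 0 x s + 4 * K 0 0 x s * H 0 0 x s * H 4 0 x s + 24 * K 0 0 x s * H 0 0 x s * H 0 0 x s * H 1 0 x s + 4 * K 0 0 x s * H 1 0 x s * H 3 0 x s + (-6) * K 0 0 x s * K 0 0 x s * K 1 0 x s * K 3 0 x s + (-16) * K 0 0 x s * K 0 0 x s * K 1 0 x s * H 2 0 x s + (-58/3) * K 0 0 x s * K 0 0 x s * K 2 0 x s * H 1 0 x s + (-14/3) * K 0 0 x s * K 0 0 x s * K 2 0 x s * K 2 0 x s + (-12) * K 0 0 x s * K 0 0 x s * K 3 0 x s * H 0 0 x s + 1/3 * K 0 0 x s * K 0 0 x s * K 6 0 x s + (-12) * K 0 0 x s * K 0 0 x s * H 0 0 x s * H 2 0 x s + (-12) * K 0 0 x s * K 0 0 x s * H 1 0 x s * H 1 0 x s + K 0 0 x s * K 0 0 x s * H 5 0 x s + 64/9 * K 0 0 x s * K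 0 0 x s * K 0 0 x s * K 1 0 x s * H 0 0 x s + (-16/9) * K 0 0 x s * K 0 0 x s * K 0 0 x s * K 1 0 x s * K 1 0 x s + (-4/9) * K 0 0 x s * K 0 0 x s * K 0 0 x s * K 4 0 x s + (-26/9) * K 0 0 x s * K 0 0 x s * K 0 0 x s * H 3 0 x s + (-4/9) * K 0 0 x s * K 0 0 x s * K 0 0 x s * K 0 0 x s * K 2 0 x s + 16/9 * K 0 0 x s * K 0 0 x s * K 0 0 x s * K 0 0 x s * H 1 0 x s + (-2/3) * K 1 0 x s * K 2 0 x s * K 3 0 x s + 4 * K 1 0 x s * K 2 0 x s * H 2 0 x s + (-4) * K 1 0 x s * K 3 0 x s * H 1 0 x s + 8 * K 1 0 x s * H 0 0 x s * H 0 0 x s * H 0 0 x s + 4 * K 1 0 x s * H 1 0 x s * H 2 0 x s + K 1 0 x s * K 1 0 x s * K 4 0 x s + 4 * K 1 0 x s * K 1 0 x s * H 0 0 x s * H 0 0 x s + 2 * K 1 0 x s * K 1 0 x s * H 3 0 x s + (-4) * K 1 0 x s * K 1 0 x s * K 1 0 x s * H 0 0 x s + (-2) * K 1 0 x s * K 1 0 x s * K 1 0 x s * K 1 0 x s + 8/3 * K 2 0 x s * K 3 0 x s * H 0 0 x s + 4 * K 2 0 x s * H 0 0 x s * H 2 0 x s + 12 * K 2 0 x s * H 1 0 x s * H 1 0 x s + (-1/3) * K 2 0 x s * H 5 0 x s + 4 * K 2 0 x s * K 2 0 x s * H 1 0 x s + 4 * K 3 0 x s * H 0 0 x s * H 1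 0 x s + (-2) * K 4 0 x s * H 0 0 x s * H 0 0 x s + 1/3 * K 6 0 x s * H 1 0 x s + 8 * H 0 0 x s * H 1 0 x s * H 2 0 x s + (-4) * H 0 0 x s * H 0 0 x s * H 3 0 x s + 8 * H 1 0 x s * H 1 0 x s * H 1 0 x s)) (at x)" for x s
    apply (rule derivative_eq_intros refl)+
    apply ((simp only: idx)?; algebra)
    done
  have pK: "K i 0 L s = K i 0 0 s" for i s using perK[OF per(1), of i 0 s] by simp
  have pH: "H i 0 L s = H i 0 0 s" for i s using perH[OF per(2), of i 0 s] by simp
  show "(4/3 * K 0 0 L s * K 1 0 L s * K 4 0 L s + 4 * K 0 0 L s * K 1 0 L s * H 0 0 L s * H 0 0 L s + 2 * K 0 0 L s * K 1 0 L s * H 3 0 L s + (-4) * K 0 0 L s * K 1 0 L s * K 1 0 L s * H 0 0 L s + (-2) * K 0 0 L s * K 1 0 L s * K 1 0 L s * K 1 0 L s + 8/3 * K 0 0 L s * K 2 0 L s * H 2 0 L s + (-8/3) * K 0 0 L s * K 3 0 L s * H 1 0 L s + 8/3 * K 0 0 L s * K 4 0 L s * H 0 0 L s + 4 * K 0 0 L s * H 0 0 L s * H 3 0 L s + 8 * K 0 0 L s * H 0 0 L s * H 0 0 L s * H 0 0 L s + (-14/3) * K 0 0 L s * K 0 0 L s * K 1 0 L s * K 2 0 L s + (-22/3) * K 0 0 L s * K 0 0 L s * K 1 0 L s * H 1 0 L s + (-12) * K 0 0 L s * K 0 0 L s * K 2 0 L s * H 0 0 L s + 1/3 * K 0 0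 L s * K 0 0 L s * K 5 0 L s + (-12) * K 0 0 L s * K 0 0 L s * H 0 0 L s * H 1 0 L s + K 0 0 L s * K 0 0 L s * H 4 0 L s + (-4/9) * K 0 0 L s * K 0 0 L s * K 0 0 L s * K 3 0 L s + (-26/9) * K 0 0 L s * K 0 0 L s * K 0 0 L s * H 2 0 L s + (-4/9) * K 0 0 L s * K 0 0 L s * K 0 0 L s * K 0 0 L s * K 1 0 L s + 16/9 * K 0 0 L s * K 0 0 L s * K 0 0 L s * K 0 0 L s * H 0 0 L s + 4/3 * K 1 0 L s * K 2 0 L s * H 1 0 L s + (-8/3) * K 1 0 L s * K 3 0 L s * H 0 0 L s + (-4) * K 1 0 L s * H 0 0 L s * H 2 0 L s + 4 * K 1 0 L s * H 1 0 L s * H 1 0 L s + (-1/3) * K 1 0 L s * K 1 0 L s * K 3 0 L s + 8 * K 2 0 L s * H 0 0 L s * H 1 0 L s + (-1/3) * K 2 0 L s * H 4 0 L s + 8/3 * K 2 0 L s * K 2 0 L s * H 0 0 L s + (-2) * K 3 0 L s * H 0 0 L s * H 0 0 L s + 1/3 * K 3 0 L s * H 3 0 L s + (-1/3) * K 4 0 L s * H 2 0 L s + 1/3 * K 5 0 L s * H 1 0 L s + 8 * H 0 0 L s * H 1 0 L s * H 1 0 L s + (-4) * H 0 0 L s * H 0 0 L s * H 2 0 L s) = (4/3 * K 0 0 0 s * K 1 0 0 s * K 4 0 0 s + 4 * K 0 0 0 s * K 1 0 0 s * H 0 0 0 s * H 0 0 0 s + 2 * K 0 0 0 s * K 1 0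 0 s * H 3 0 0 s + (-4) * K 0 0 0 s * K 1 0 0 s * K 1 0 0 s * H 0 0 0 s + (-2) * K 0 0 0 s * K 1 0 0 s * K 1 0 0 s * K 1 0 0 s + 8/3 * K 0 0 0 s * K 2 0 0 s * H 2 0 0 s + (-8/3) * K 0 0 0 s * K 3 0 0 s * H 1 0 0 s + 8/3 * K 0 0 0 s * K 4 0 0 s * H 0 0 0 s + 4 * K 0 0 0 s * H 0 0 0 s * H 3 0 0 s + 8 * K 0 0 0 s * H 0 0 0 s * H 0 0 0 s * H 0 0 0 s + (-14/3) * K 0 0 0 s * K 0 0 0 s * K 1 0 0 s * K 2 0 0 s + (-22/3) * K 0 0 0 s * K 0 0 0 s * K 1 0 0 s * H 1 0 0 s + (-12) * K 0 0 0 s * K 0 0 0 s * K 2 0 0 s * H 0 0 0 s + 1/3 * K 0 0 0 s * K 0 0 0 s * K 5 0 0 s + (-12) * K 0 0 0 s * K 0 0 0 s * H 0 0 0 s * H 1 0 0 s + K 0 0 0 s * K 0 0 0 s * H 4 0 0 s + (-4/9) * K 0 0 0 s * K 0 0 0 s * K 0 0 0 s * K 3 0 0 s + (-26/9) * K 0 0 0 s * K 0 0 0 s * K 0 0 0 s * H 2 0 0 s + (-4/9) * K 0 0 0 s * K 0 0 0 s * K 0 0 0 s * K 0 0 0 s * K 1 0 0 s + 16/9 * K 0 0 0 s * K 0 0 0 s * K 0 0 0 s * K 0 0 0 s * H 0 0 0 s + 4/3 * K 1 0 0 s * K 2 0 0 s * H 1 0 0 s + (-8/3) * K 1 0 0 s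 * K 3 0 0 s * H 0 0 0 s + (-4) * K 1 0 0 s * H 0 0 0 s * H 2 0 0 s + 4 * K 1 0 0 s * H 1 0 0 s * H 1 0 0 s + (-1/3) * K 1 0 0 s * K 1 0 0 s * K 3 0 0 s + 8 * K 2 0 0 s * H 0 0 0 s * H 1 0 0 s + (-1/3) * K 2 0 0 s * H 4 0 0 s + 8/3 * K 2 0 0 s * K 2 0 0 s * H 0 0 0 s + (-2) * K 3 0 0 s * H 0 0 0 s * H 0 0 0 s + 1/3 * K 3 0 0 s * H 3 0 0 s + (-1/3) * K 4 0 0 s * H 2 0 0 s + 1/3 * K 5 0 0 s * H 1 0 0 s + 8 * H 0 0 0 s * H 1 0 0 s * H 1 0 0 s + (-4) * H 0 0 0 s * H 0 0 0 s * H 2 0 0 s)" for s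
    unfolding pK pH by (rule refl)
qed

lemma cons1:
  assumes L: "L > 0" and per: "\<And>x t. K 0 0 (x+L) t = K 0 0 x t" "\<And>x t. H 0 0 (x+L) t = H 0 0 x t"
  shows "integral {0..L} (\<lambda>x. (K 0 0 x t)) = integral {0..L} (\<lambda>x. (K 0 0 x s))"
proof (rule conserved[where \<rho>="\<lambda>x s. (K 0 0 x s)" and \<rho>t="\<lambda>x s. (2 * K 0 0 x s * K 2 0 x s + 4 * K 0 0 x s * H 1 0 x s + 4 * K 1 0 x s * H 0 0 x s + 2 * K 1 0 x s * K 1 0 x s + (-1) * K 4 0 x s + (-2) * H 3 0 x s)" and \<Phi>="\<lambda>x s. (2 * K 0 0 x s * K 1 0 x s + 4 * K 0 0 x s * H 0 0 x s + (-1) * K 3 0 x s + (-2) * H 2 0 x s)", OF L])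
  show "((\<lambda>s. (K 0 0 x s)) has_real_derivative (2 * K 0 0 x s * K 2 0 x s + 4 * K 0 0 x s * H 1 0 x s + 4 * K 1 0 x s * H 0 0 x s + 2 * K 1 0 x s * K 1 0 x s + (-1) * K 4 0 x s + (-2) * H 3 0 x s)) (at s)" for x s
    apply (rule derivative_eq_intros refl)+
    apply (simp only: idx kt1 kt2 kt11 kt21 ht11)
    apply (rule refl | algebra)?
    done
  show "continuous_on UNIV (\<lambda>p. (2 * K 0 0 (snd p) (fst p) * K 2 0 (snd p) (fst p) + 4 * K 0 0 (snd p) (fst p) * H 1 0 (snd p) (fst p) + 4 * K 1 0 (snd p) (fst p) * H 0 0 (snd p) (fst p) + 2 * K 1 0 (snd p) (fst p) * K 1 0 (snd p) (fst p) + (-1) * K 4 0 (snd p) (fst p) + (-2) * H 3 0 (snd p) (fst p)))"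
    by (intro continuous_intros)
  show "continuous_on UNIV (\<lambda>x. (K 0 0 x s))" for s
    by (intro continuous_intros)
  show "((\<lambda>y. (2 * K 0 0 y s * K 1 0 y s + 4 * K 0 0 y s * H 0 0 y s + (-1) * K 3 0 y s + (-2) * H 2 0 y s)) has_real_derivative (2 * K 0 0 x s * K 2 0 x s + 4 * K 0 0 x s * H 1 0 x s + 4 * K 1 0 x s * H 0 0 x s + 2 * K 1 0 x s * K 1 0 x s + (-1) * K 4 0 x s + (-2) * H 3 0 x s)) (at x)" for x s
    apply (rule derivative_eq_intros refl)+
    apply ((simp only: idx)?; algebra)
    done
  have pK: "K i 0 L s = K i 0 0 s" for i s using perK[OF per(1), of i 0 s] by simp
  have pH: "H i 0 L s = H i 0 0 s" for i s using perH[OF per(2), of i 0 s] by simp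
  show "(2 * K 0 0 L s * K 1 0 L s + 4 * K 0 0 L s * H 0 0 L s + (-1) * K 3 0 L s + (-2) * H 2 0 L s) = (2 * K 0 0 0 s * K 1 0 0 s + 4 * K 0 0 0 s * H 0 0 0 s + (-1) * K 3 0 0 s + (-2) * H 2 0 0 s)" for s
    unfolding pK pH by (rule refl)
qed

lemma dens2: "dens rho2 (\<lambda>y. K 0 0 y t) (\<lambda>y. H 0 0 y t) = (\<lambda>x. (K 0 0 x t * H 0 0 x t))"
  unfolding dens_def jetK jetH rho2_def by (rule refl)
lemma dens4: "dens rho4 (\<lambda>y. K 0 0 y t) (\<lambda>y. H 0 0 y t) = (\<lambda>x. ((-1) * K 0 0 x t * K 1 0 x t * K 1 0 x t + 2 * K 0 0 x t * H 0 0 x t * H 0 0 x t + (-1) * K 0 0 x t * K 0 0 x t * K 2 0 x t + (-1) * K 0 0 x t * K 0 0 x t * H 1 0 x t + 1/9 * K 0 0 x t * K 0 0 x t * K 0 0 x t * K 0 0 x t + K 2 0 x t * H 1 0 x t + 1/3 * K 2 0 x t * K 2 0 x t + H 1 0 x t * H 1 0 x t))"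
  unfolding dens_def jetK jetH rho4_def by (rule ext) algebra

end

locale cflow =
  fixes G :: "nat \<Rightarrow> nat \<Rightarrow> real \<Rightarrow> real \<Rightarrow> real^3" and K H :: "nat \<Rightarrow> nat \<Rightarrow> real \<Rightarrow> real \<Rightarrow> real"
  assumes fG: "fam G" and fK: "fam K" and fH: "fam H"
    and ind: "\<And>x t. det (vector [G 0 0 x t, G 1 0 x t, G 2 0 x t] :: real^3^3) = 1"
    and fr: "\<And>x t. G 3 0 x t = (K 1 0 x t + H 0 0 x t) *\<^sub>R G 0 0 x t + K 0 0 x t *\<^sub>R G 1 0 x t"
    and fl: "\<And>x t. G 0 1 x t = (-(H 1 0 x t + 1/3*(K 2 0 x t + 2*(K 0 0 x t)^2))) *\<^sub>R G 0 0 x t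
                + H 0 0 x t *\<^sub>R G 1 0 x t + K 0 0 x t *\<^sub>R G 2 0 x t"
begin

lemma Kdx[derivative_intros]: "D = K (Suc i) j x t \<Longrightarrow> ((\<lambda>y. K i j y t) has_real_derivative D) (at x within S)"
  using famr_dx[OF fK, of i j t x] by (simp add: has_field_derivative_at_within)
lemma Hdx[derivative_intros]: "D = H (Suc i) j x t \<Longrightarrow> ((\<lambda>y. H i j y t) has_real_derivative D) (at x within S)"
  using famr_dx[OF fH, of i j t x] by (simp add: has_field_derivative_at_within)
lemma Kdt[derivative_intros]: "D = K i (Suc j) x t \<Longrightarrow> ((\<lambda>s. K i j x s) has_real_derivative D) (at t within S)"
  using famr_dt[OF fK, of i j x t] by (simp add: has_field_derivative_at_within)
lemma Hdt[derivative_intros]: "D = H i (Suc j) x t \<Longrightarrow> ((\<lambda>s. H i j x s) has_real_derivative D) (at t within S)"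
  using famr_dt[OF fH, of i j x t] by (simp add: has_field_derivative_at_within)

lemma fr3: "G 3 0 y t = (K 1 0 y t + H 0 0 y t) *\<^sub>R G 0 0 y t + K 0 0 y t *\<^sub>R G 1 0 y t + 0 *\<^sub>R G 2 0 y t"
  using fr by simp

lemma comb_has:
  assumes "(f0 has_real_derivative d0) (at x)" "(f1 has_real_derivative d1) (at x)" "(f2 has_real_derivative d2) (at x)"
  shows "((\<lambda>y. f0 y *\<^sub>R G 0 0 y t + f1 y *\<^sub>R G 1 0 y t + f2 y *\<^sub>R G 2 0 y t) has_vector_derivative
     ((d0 + f2 x * (K 1 0 x t + H 0 0 x t)) *\<^sub>R G 0 0 x t + (d1 + f0 x + f2 x * K 0 0 x t) *\<^sub>R G 1 0 x t
       + (d2 + f1 x) *\<^sub>R G 2 0 x t)) (at x)"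
proof -
  have "((\<lambda>y. f0 y *\<^sub>R G 0 0 y t + f1 y *\<^sub>R G 1 0 y t + f2 y *\<^sub>R G 2 0 y t) has_vector_derivative
     (f0 x *\<^sub>R G 1 0 x t + d0 *\<^sub>R G 0 0 x t) + (f1 x *\<^sub>R G 2 0 x t + d1 *\<^sub>R G 1 0 x t) + (f2 x *\<^sub>R G 3 0 x t + d2 *\<^sub>R G 2 0 x t)) (at x)"
    using fam_dx[OF fG, of 0 0 t x] fam_dx[OF fG, of 1 0 t x] fam_dx[OF fG, of 2 0 t x]
    by (intro has_vector_derivative_add has_vector_derivative_scaleR assms) (simp_all add: numeral_2_eq_2 numeral_3_eq_3)
  moreover have "(f0 x *\<^sub>R G 1 0 x t + d0 *\<^sub>R G 0 0 x t) + (f1 x *\<^sub>R G 2 0 x t + d1 *\<^sub>R G 1 0 x t) + (f2 x *\<^sub>R G 3 0 x t + d2 *\<^sub>R G 2 0 x t)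
     = (d0 + f2 x * (K 1 0 x t + H 0 0 x t)) *\<^sub>R G 0 0 x t + (d1 + f0 x + f2 x * K 0 0 x t) *\<^sub>R G 1 0 x t
       + (d2 + f1 x) *\<^sub>R G 2 0 x t"
    by (simp add: fr algebra_simps)
  ultimately show ?thesis by simp
qed

lemma comb_step:
  assumes "\<And>y. G i j y t = f0 y *\<^sub>R G 0 0 y t + f1 y *\<^sub>R G 1 0 y t + f2 y *\<^sub>R G 2 0 y t"
    and "Suc i = i'"
    and "(f0 has_real_derivative d0) (at x)" "(f1 has_real_derivative d1) (at x)" "(f2 has_real_derivative d2) (at x)"
    and "d0 + f2 x * (K 1 0 x t + H 0 0 x t) = n0" "d1 + f0 x + f2 x * K 0 0 x t = n1" "d2 + f1 x = n2"
  shows "G i' j x t = n0 *\<^sub>R G 0 0 x t + n1 *\<^sub>R G 1 0 x t + n2 *\<^sub>R G 2 0 x t"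
proof -
  have e: "(\<lambda>y. G i j y t) = (\<lambda>y. f0 y *\<^sub>R G 0 0 y t + f1 y *\<^sub>R G 1 0 y t + f2 y *\<^sub>R G 2 0 y t)"
    using assms(1) by auto
  show ?thesis
    using vector_derivative_unique_at[OF fam_dx[OF fG, of i j t x], unfolded e, OF comb_has[OF assms(3-5)]]
      assms(2,6-8) by simp
qed

lemma extr:
  fixes e0 e1 e2 X :: "real^3"
  assumes "X = a0 *\<^sub>R e0 + a1 *\<^sub>R e1 + a2 *\<^sub>R e2"
    and "X = p *\<^sub>R e0 + q *\<^sub>R (b0 *\<^sub>R e0 + b1 *\<^sub>R e1 + b2 *\<^sub>R e2) + r *\<^sub>R e1 + s *\<^sub>R (c0 *\<^sub>R e0 + c1 *\<^sub>R e1 + c2 *\<^sub>R e2)"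
    and "det (vector [e0,e1,e2] :: real^3^3) = 1"
  shows "a0 = p + q*b0 + s*c0 \<and> a1 = q*b1 + r + s*c1 \<and> a2 = q*b2 + s*c2"
proof -
  have "(a0 - (p + q*b0 + s*c0)) *\<^sub>R e0 + (a1 - (q*b1 + r + s*c1)) *\<^sub>R e1 + (a2 - (q*b2 + s*c2)) *\<^sub>R e2 = 0"
    using assms(1,2) by (simp add: algebra_simps)
  from three_indep[OF assms(3) this] show ?thesis by simp
qed


lemma h0: "G 0 1 x t = ((-2/3) * K 0 0 x t * K 0 0 x t + (-1/3) * K 2 0 x t + (-1) * H 1 0 x t) *\<^sub>R G 0 0 x t + (H 0 0 x t) *\<^sub>R G 1 0 x t + (K 0 0 x t) *\<^sub>R G 2 0 x t"
  using fl[of x t] by (simp add: power2_eq_square algebra_simps)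

lemma h1: "G 1 1 x t = ((-1/3) * K 0 0 x t * K 1 0 x t + K 0 0 x t * H 0 0 x t + (-1/3) * K 3 0 x t + (-1) * H 2 0 x t) *\<^sub>R G 0 0 x t + (1/3 * K 0 0 x t * K 0 0 x t + (-1/3) * K 2 0 x t) *\<^sub>R G 1 0 x t + (K 1 0 x t + H 0 0 x t) *\<^sub>R G 2 0 x t"
  apply (rule comb_step[OF h0, where x=x])
  apply simp
  apply (rule derivative_eq_intros refl)+
  apply ((simp only: idx)?; algebra)+
  done

lemma h2: "G 2 1 x t = ((-1/3) * K 0 0 x t * K 2 0 x t + K 0 0 x t * H 1 0 x t + 3 * K 1 0 x t * H 0 0 x t + 2/3 * K 1 0 x t * K 1 0 x t + (-1/3) * K 4 0 x t + H 0 0 x t * H 0 0 x t + (-1) * H 3 0 x t) *\<^sub>R G 0 0 x t + (4/3 * K 0 0 x t * K 1 0 x t + 2 * K 0 0 x t * H 0 0 x t + (-2/3) * K 3 0 x t + (-1) * H 2 0 x t) *\<^sub>R G 1 0 x t + (1/3 * K 0 0 x t * K 0 0 x t + 2/3 * K 2 0 x t + H 1 0 x t) *\<^sub>R G 2 0 x t"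
  apply (rule comb_step[OF h1, where x=x])
  apply simp
  apply (rule derivative_eq_intros refl)+
  apply ((simp only: idx)?; algebra)+
  done

lemma h3: "G 3 1 x t = ((-1/3) * K 0 0 x t * K 3 0 x t + K 0 0 x t * H 2 0 x t + 1/3 * K 0 0 x t * K 0 0 x t * K 1 0 x t + 1/3 * K 0 0 x t * K 0 0 x t * H 0 0 x t + 5/3 * K 1 0 x t * K 2 0 x t + 5 * K 1 0 x t * H 1 0 x t + 11/3 * K 2 0 x t * H 0 0 x t + (-1/3) * K 5 0 x t + 3 * H 0 0 x t * H 1 0 x t + (-1) * H 4 0 x t) *\<^sub>R G 0 0 x t + (5/3 * K 0 0 x t * K 2 0 x t + 4 * K 0 0 x t * H 1 0 x t + 1/3 * K 0 0 x t * K 0 0 x t * K 0 0 x t + 5 * K 1 0 x t * H 0 0 x t + 2 * K 1 0 x t * K 1 0 x t + (-1) * K 4 0 x t + H 0 0 x t * H 0 0 x t + (-2) * H 3 0 x t) *\<^sub>R G 1 0 x t + (2 * K 0 0 x t * K 1 0 x t + 2 * K 0 0 x t * H 0 0 x t) *\<^sub>R G 2 0 x t"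
  apply (rule comb_step[OF h2, where x=x])
  apply simp
  apply (rule derivative_eq_intros refl)+
  apply ((simp only: idx)?; algebra)+
  done


lemma tfr: "G 3 1 x t = (K 1 1 x t + H 0 1 x t) *\<^sub>R G 0 0 x t + (K 1 0 x t + H 0 0 x t) *\<^sub>R G 0 1 x t + K 0 1 x t *\<^sub>R G 1 0 x t + K 0 0 x t *\<^sub>R G 1 1 x t"
proof -
  have e: "(\<lambda>s. G 3 0 x s) = (\<lambda>s. (K 1 0 x s + H 0 0 x s) *\<^sub>R G 0 0 x s + K 0 0 x s *\<^sub>R G 1 0 x s)" using fr by auto
  have d: "((\<lambda>s. (K 1 0 x s + H 0 0 x s) *\<^sub>R G 0 0 x s + K 0 0 x s *\<^sub>R G 1 0 x s) has_vector_derivative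
     ((K 1 0 x t + H 0 0 x t) *\<^sub>R G 0 1 x t + (K 1 1 x t + H 0 1 x t) *\<^sub>R G 0 0 x t) + (K 0 0 x t *\<^sub>R G 1 1 x t + K 0 1 x t *\<^sub>R G 1 0 x t)) (at t)"
  proof -
    have k: "((\<lambda>s. K 1 0 x s + H 0 0 x s) has_real_derivative K 1 1 x t + H 0 1 x t) (at t)"
      by (rule DERIV_add[OF famr_dt[OF fK, of 1 0 x t, unfolded idx] famr_dt[OF fH, of 0 0 x t, unfolded idx]])
    have k0: "((\<lambda>s. K 0 0 x s) has_real_derivative K 0 1 x t) (at t)"
      by (rule famr_dt[OF fK, of 0 0 x t, unfolded idx])
    have g0: "((\<lambda>s. G 0 0 x s) has_vector_derivative G 0 1 x t) (at t)"
      by (rule fam_dt[OF fG, of 0 0 x t, unfolded idx])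
    have g1: "((\<lambda>s. G 1 0 x s) has_vector_derivative G 1 1 x t) (at t)"
      by (rule fam_dt[OF fG, of 1 0 x t, unfolded idx])
    show ?thesis by (rule has_vector_derivative_add[OF has_vector_derivative_scaleR[OF k g0] has_vector_derivative_scaleR[OF k0 g1]])
  qed
  have "G 3 1 x t = ((K 1 0 x t + H 0 0 x t) *\<^sub>R G 0 1 x t + (K 1 1 x t + H 0 1 x t) *\<^sub>R G 0 0 x t) + (K 0 0 x t *\<^sub>R G 1 1 x t + K 0 1 x t *\<^sub>R G 1 0 x t)"
    using vector_derivative_unique_at[OF fam_dt[OF fG, of 3 0 x t, unfolded idx e] d] .
  then show ?thesis by (simp add: algebra_simps)
qed

lemma kt1: "K 0 1 x t = (2 * K 0 0 x t * K 2 0 x t + 4 * K 0 0 x t * H 1 0 x t + 4 * K 1 0 x t * H 0 0 x t + 2 * K 1 0 x t * K 1 0 x t + (-1) * K 4 0 x t + (-2) * H 3 0 x t)"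
proof -
  have "(5/3 * K 0 0 x t * K 2 0 x t + 4 * K 0 0 x t * H 1 0 x t + 1/3 * K 0 0 x t * K 0 0 x t * K 0 0 x t + 5 * K 1 0 x t * H 0 0 x t + 2 * K 1 0 x t * K 1 0 x t + (-1) * K 4 0 x t + H 0 0 x t * H 0 0 x t + (-2) * H 3 0 x t) = (K 1 0 x t + H 0 0 x t) * (H 0 0 x t) + K 0 1 x t + (K 0 0 x t) * (1/3 * K 0 0 x t * K 0 0 x t + (-1/3) * K 2 0 x t)"
    using extr[OF h3 tfr[unfolded h0 h1] ind] by blast
  then have "K 0 1 x t = (5/3 * K 0 0 x t * K 2 0 x t + 4 * K 0 0 x t * H 1 0 x t + 1/3 * K 0 0 x t * K 0 0 x t * K 0 0 x t + 5 * K 1 0 x t * H 0 0 x t + 2 * K 1 0 x t * K 1 0 x t + (-1) * K 4 0 x t + H 0 0 x t * H 0 0 x t + (-2) * H 3 0 x t) - (K 1 0 x t + H 0 0 x t) * (H 0 0 x t) - (K 0 0 x t) * (1/3 * K 0 0 x t * K 0 0 x t + (-1/3) * K 2 0 x t)" by linarith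
  also have "\<dots> = (2 * K 0 0 x t * K 2 0 x t + 4 * K 0 0 x t * H 1 0 x t + 4 * K 1 0 x t * H 0 0 x t + 2 * K 1 0 x t * K 1 0 x t + (-1) * K 4 0 x t + (-2) * H 3 0 x t)" by algebra
  finally show ?thesis .
qed

lemma kt1x: "K 1 1 x t = (2 * K 0 0 x t * K 3 0 x t + 4 * K 0 0 x t * H 2 0 x t + 6 * K 1 0 x t * K 2 0 x t + 8 * K 1 0 x t * H 1 0 x t + 4 * K 2 0 x t * H 0 0 x t + (-1) * K 5 0 x t + (-2) * H 4 0 x t)"
  apply (rule deriv_step[where F="\<lambda>y. K 0 1 y t"])
    apply (rule kt1)
   apply (rule derivative_eq_intros refl)+
   apply (simp only: idx)
  apply (rule derivative_eq_intros refl)+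
  apply ((simp only: idx)?; algebra)+
  done

lemma kt2: "H 0 1 x t = ((-2) * K 0 0 x t * K 3 0 x t + (-2) * K 0 0 x t * H 2 0 x t + 4/3 * K 0 0 x t * K 0 0 x t * K 1 0 x t + (-4) * K 1 0 x t * K 2 0 x t + (-2) * K 1 0 x t * H 1 0 x t + 2/3 * K 5 0 x t + 4 * H 0 0 x t * H 1 0 x t + H 4 0 x t)"
proof -
  have "((-1/3) * K 0 0 x t * K 3 0 x t + K 0 0 x t * H 2 0 x t + 1/3 * K 0 0 x t * K 0 0 x t * K 1 0 x t + 1/3 * K 0 0 x t * K 0 0 x t * H 0 0 x t + 5/3 * K 1 0 x t * K 2 0 x t + 5 * K 1 0 x t * H 1 0 x t + 11/3 * K 2 0 x t * H 0 0 x t + (-1/3) * K 5 0 x t + 3 * H 0 0 x t * H 1 0 x t + (-1) * H 4 0 x t) = (K 1 1 x t + H 0 1 x t) + (K 1 0 x t + H 0 0 x t) * ((-2/3) * K 0 0 x t * K 0 0 x t + (-1/3) * K 2 0 x t + (-1) * H 1 0 x t) + (K 0 0 x t) * ((-1/3) * K 0 0 x t * K 1 0 x t + K 0 0 x t * H 0 0 x t + (-1/3) * K 3 0 x t + (-1) * H 2 0 x t)"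
    using extr[OF h3 tfr[unfolded h0 h1] ind] by blast
  then have "H 0 1 x t = ((-1/3) * K 0 0 x t * K 3 0 x t + K 0 0 x t * H 2 0 x t + 1/3 * K 0 0 x t * K 0 0 x t * K 1 0 x t + 1/3 * K 0 0 x t * K 0 0 x t * H 0 0 x t + 5/3 * K 1 0 x t * K 2 0 x t + 5 * K 1 0 x t * H 1 0 x t + 11/3 * K 2 0 x t * H 0 0 x t + (-1/3) * K 5 0 x t + 3 * H 0 0 x t * H 1 0 x t + (-1) * H 4 0 x t) - K 1 1 x t - (K 1 0 x t + H 0 0 x t) * ((-2/3) * K 0 0 x t * K 0 0 x t + (-1/3) * K 2 0 x t + (-1) * H 1 0 x t) - (K 0 0 x t) * ((-1/3) * K 0 0 x t * K 1 0 x t + K 0 0 x t * H 0 0 x t + (-1/3) * K 3 0 x t + (-1) * H 2 0 x t)" by linarith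
  also have "\<dots> = ((-2) * K 0 0 x t * K 3 0 x t + (-2) * K 0 0 x t * H 2 0 x t + 4/3 * K 0 0 x t * K 0 0 x t * K 1 0 x t + (-4) * K 1 0 x t * K 2 0 x t + (-2) * K 1 0 x t * H 1 0 x t + 2/3 * K 5 0 x t + 4 * H 0 0 x t * H 1 0 x t + H 4 0 x t)" unfolding kt1x by algebra
  finally show ?thesis .
qed

end

theorem mainTheorem3:
  fixes \<gamma> :: "real \<Rightarrow> real \<Rightarrow> real^3"
    and k1 k2 :: "real \<Rightarrow> real \<Rightarrow> real"
  assumes smooth: "C_inf2 \<gamma>" "C_inf2 k1" "C_inf2 k2"
    and arclength: "\<forall>x t. det (vector [\<gamma> x t, Dx 1 \<gamma> x t, Dx 2 \<gamma> x t] :: real^3^3) = 1"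
    and frenet: "\<forall>x t. Dx 3 \<gamma> x t = Dx 1 (\<lambda>y s. k1 y s *\<^sub>R \<gamma> y s) x t + k2 x t *\<^sub>R \<gamma> x t"
    and flow: "\<forall>x t. Dt \<gamma> x t = k1 x t *\<^sub>R Dx 2 \<gamma> x t + k2 x t *\<^sub>R Dx 1 \<gamma> x t
                 + (- (Dx 1 k2 x t + 1/3 * (Dx 2 k1 x t + 2 * (k1 x t)^2))) *\<^sub>R \<gamma> x t"
  shows "(\<forall>x t.
            Dt k1 x t = opP1 (\<lambda>y. k1 y t) (\<lambda>y. k2 y t)
                          (euler1 rho2 (\<lambda>y. k1 y t) (\<lambda>y. k2 y t))
                          (euler2 rho2 (\<lambda>y. k1 y t) (\<lambda>y. k2 y t)) x
          \<and> Dt k2 x t = opP2 (\<lambda>y. k1 y t) (\<lambda>y. k2 y t)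
                          (euler1 rho2 (\<lambda>y. k1 y t) (\<lambda>y. k2 y t))
                          (euler2 rho2 (\<lambda>y. k1 y t) (\<lambda>y. k2 y t)) x
          \<and> Dt k1 x t = opQ1 (euler1 rho4 (\<lambda>y. k1 y t) (\<lambda>y. k2 y t))
                          (euler2 rho4 (\<lambda>y. k1 y t) (\<lambda>y. k2 y t)) x
          \<and> Dt k2 x t = opQ2 (euler1 rho4 (\<lambda>y. k1 y t) (\<lambda>y. k2 y t))
                          (euler2 rho4 (\<lambda>y. k1 y t) (\<lambda>y. k2 y t)) x)
         \<and> (\<forall>L>0. (\<forall>x t. k1 (x + L) t = k1 x t \<and> k2 (x + L) t = k2 x t) \<longrightarrow>
              (\<forall>t s.
                 integral {0..L} (dens rho2 (\<lambda>y. k1 y t) (\<lambda>y. k2 y t))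
                   = integral {0..L} (dens rho2 (\<lambda>y. k1 y s) (\<lambda>y. k2 y s))
               \<and> integral {0..L} (dens rho4 (\<lambda>y. k1 y t) (\<lambda>y. k2 y t))
                   = integral {0..L} (dens rho4 (\<lambda>y. k1 y s) (\<lambda>y. k2 y s))
               \<and> integral {0..L} (\<lambda>x. k1 x t) = integral {0..L} (\<lambda>x. k1 x s)))"
proof -
  obtain G where G0: "G 0 0 = \<gamma>" and fG: "fam G" using C_inf2_fam[OF smooth(1)] by blast
  obtain K where K0: "K 0 0 = k1" and fK: "fam K" using C_inf2_fam[OF smooth(2)] by blast
  obtain H where H0: "H 0 0 = k2" and fH: "fam H" using C_inf2_fam[OF smooth(3)] by blast
  have A: "\<And>x t. det (vector [G 0 0 x t, G 1 0 x t, G 2 0 x t] :: real^3^3) = 1"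
    using arclength unfolding G0[symmetric] fam_Dx[OF fG] by blast
  have prod: "Dx 1 (\<lambda>y s. K 0 0 y s *\<^sub>R G 0 0 y s) x t = K 1 0 x t *\<^sub>R G 0 0 x t + K 0 0 x t *\<^sub>R G 1 0 x t" for x t
  proof -
    have d: "((\<lambda>y. K 0 0 y t *\<^sub>R G 0 0 y t) has_vector_derivative K 0 0 x t *\<^sub>R G 1 0 x t + K 1 0 x t *\<^sub>R G 0 0 x t) (at x)"
      using has_vector_derivative_scaleR[OF famr_dx[OF fK, of 0 0 t x, unfolded idx] fam_dx[OF fG, of 0 0 t x, unfolded idx]] .
    have "Dx 1 (\<lambda>y s. K 0 0 y s *\<^sub>R G 0 0 y s) x t = vector_derivative (\<lambda>y. K 0 0 y t *\<^sub>R G 0 0 y t) (at x)"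
      by (simp add: Dx_def)
    also have "\<dots> = K 0 0 x t *\<^sub>R G 1 0 x t + K 1 0 x t *\<^sub>R G 0 0 x t" by (rule vector_derivative_at[OF d])
    finally show ?thesis by (simp add: algebra_simps)
  qed
  have B: "\<And>x t. G 3 0 x t = (K 1 0 x t + H 0 0 x t) *\<^sub>R G 0 0 x t + K 0 0 x t *\<^sub>R G 1 0 x t"
    using frenet unfolding G0[symmetric] K0[symmetric] H0[symmetric] fam_Dx[OF fG] prod
    by (simp add: algebra_simps)
  have C: "\<And>x t. G 0 1 x t = (-(H 1 0 x t + 1/3*(K 2 0 x t + 2*(K 0 0 x t)^2))) *\<^sub>R G 0 0 x t
                + H 0 0 x t *\<^sub>R G 1 0 x t + K 0 0 x t *\<^sub>R G 2 0 x t"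
    using flow unfolding G0[symmetric] K0[symmetric] H0[symmetric] fam_Dx[OF fG] fam_Dx[OF fK] fam_Dx[OF fH] fam_Dt[OF fG]
    by (simp add: algebra_simps)
  interpret C: cflow G K H
    by unfold_locales (rule fG, rule fK, rule fH, rule A, rule B, rule C)
  interpret KF: kfam K H
    by unfold_locales (rule fK, rule fH, rule C.kt1, rule C.kt2)
  show ?thesis
    unfolding K0[symmetric] H0[symmetric] fam_Dt[OF fK] fam_Dt[OF fH] KF.dens2 KF.dens4
    apply (intro conjI allI impI)
          apply (rule KF.T1)
         apply (rule KF.T2)
        apply (rule KF.T3)
       apply (rule KF.T4)
      apply (rule KF.cons2; auto)
     apply (rule KF.cons4; auto)
    apply (rule KF.cons1; auto)
    done
qed

end
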